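(* Let $P=C_1\cup C_2$ be a finite poset which is the disjoint union of two nonempty chains $C_1,C_2$ such that no element of $C_1$ is comparable with any element of $C_2$. Then for every $\mathbf a\in\mathrm{Orp}(P)$, $$\mathbf a!=\#\mathcal A(\mathbf a).$$ Moreover, if every block of $\mathbf a$ is contained in $C_1$ or in $C_2$ (i.e. $\mathbf a=(\mathbf a\cap C_1)\cup(\mathbf a\cap C_2)$), then $\mathfrak d(\mathbf a)=0$.
   Context: For a finite poset $P$, a partition of $P$ is a set of nonempty, pairwise disjoint subsets (blocks) whose union is $P$; $\mathcal P(P)$ is the set of partitions, ordered by refinement: $\mathbf a\le\mathbf b$ iff every block of $\mathbf a$ is contained in some block of $\mathbf b$. $|\mathbf a|$ denotes the number of blocks. A map $f:P\to\mathbb N$ is order-preserving if $x\le y$ implies $f(x)\le f(y)$; $\ker f$ denotes the set of nonempty fibres $f^{-1}(u)$. The set of ordered partitions is $\mathrm{Orp}(P)=\{\ker f: f:P\to\mathbb N \text{ order-preserving}\}\subseteq\mathcal P(P)$, with the induced order. For $\mathbf a\in\mathrm{Orp}(P)$, its factorial is $\mathbf a!=\#\{f:P\to\{1,\dots,|\mathbf a|\}\ \text{order-preserving}:\ \ker f=\mathbf a\}$. For $C\subseteq P$, $\mathbf a\cap C=\{B\cap C:B\in\mathbf a\}\setminus\{\emptyset\}$. A chain is a totally ordered subset. The antichain ancestry of $\mathbf a\in\mathrm{Orp}(P)$ is $\mathcal A(\mathbf a)=\{\mathbf b\in\mathrm{Orp}(P):\mathbf b\ge\mathbf a,\ \mathbf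 b\cap C=\mathbf a\cap C\text{ for every chain }C\subseteq P\}$, and $\mathfrak d(\mathbf a)=\sum_{\mathbf b\in\mathcal A(\mathbf a)}(-1)^{|\mathbf b|-1}\frac{\mathbf b!}{|\mathbf b|}$. *)

theory Defs
  imports "HOL-Library.FuncSet" Complex_Main
begin

definition poset_on :: "'a set \<Rightarrow> ('a \<Rightarrow> 'a \<Rightarrow> bool) \<Rightarrow> bool" where
  "poset_on P le \<longleftrightarrow>
     (\<forall>x\<in>P. le x x) \<and>
     (\<forall>x\<in>P. \<forall>y\<in>P. le x y \<and> le y x \<longrightarrow> x = y) \<and>
     (\<forall>x\<in>P. \<forall>y\<in>P. \<forall>z\<in>P. le x y \<and> le y z \<longrightarrow> le x z)"

definition is_chain :: "'a set \<Rightarrow> ('a \<Rightarrow> 'a \<Rightarrow> bool) \<Rightarrow> 'a set \<Rightarrow> bool" where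
  "is_chain P le C \<longleftrightarrow> C \<subseteq> P \<and> (\<forall>x\<in>C. \<forall>y\<in>C. le x y \<or> le y x)"

definition order_pres :: "'a set \<Rightarrow> ('a \<Rightarrow> 'a \<Rightarrow> bool) \<Rightarrow> ('a \<Rightarrow> nat) \<Rightarrow> bool" where
  "order_pres P le f \<longleftrightarrow> (\<forall>x\<in>P. \<forall>y\<in>P. le x y \<longrightarrow> f x \<le> f y)"

definition kern :: "'a set \<Rightarrow> ('a \<Rightarrow> nat) \<Rightarrow> 'a set set" where
  "kern P f = {{x\<in>P. f x = u} | u. {x\<in>P. f x = u} \<noteq> {}}"

definition Orp :: "'a set \<Rightarrow> ('a \<Rightarrow> 'a \<Rightarrow> bool) \<Rightarrow> 'a set set set" where
  "Orp P le = {kern P f | f. order_pres P le f}"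

definition refines :: "'a set set \<Rightarrow> 'a set set \<Rightarrow> bool" where
  "refines a b \<longleftrightarrow> (\<forall>B\<in>a. \<exists>B'\<in>b. B \<subseteq> B')"

definition opfact :: "'a set \<Rightarrow> ('a \<Rightarrow> 'a \<Rightarrow> bool) \<Rightarrow> 'a set set \<Rightarrow> nat" where
  "opfact P le a = card {f \<in> P \<rightarrow>\<^sub>E {1..card a}. order_pres P le f \<and> kern P f = a}"

definition part_restr :: "'a set set \<Rightarrow> 'a set \<Rightarrow> 'a set set" where
  "part_restr a C = {B \<inter> C | B. B \<in> a} - {{}}"

definition anc :: "'a set \<Rightarrow> ('a \<Rightarrow> 'a \<Rightarrow> bool) \<Rightarrow> 'a set set \<Rightarrow> 'a set set set" where
  "anc P le a = {b \<in> Orp P le. refines a b \<and>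
      (\<forall>C. is_chain P le C \<longrightarrow> part_restr b C = part_restr a C)}"

definition dfrak :: "'a set \<Rightarrow> ('a \<Rightarrow> 'a \<Rightarrow> bool) \<Rightarrow> 'a set set \<Rightarrow> real" where
  "dfrak P le a = (\<Sum>b\<in>anc P le a. (-1) ^ (card b - 1) * real (opfact P le b) / real (card b))"

end

theory Submission
  imports Defs
begin


definition ispart :: "'a set \<Rightarrow> 'a set set \<Rightarrow> bool" where
  "ispart P a \<longleftrightarrow> (\<forall>B\<in>a. B \<noteq> {} \<and> B \<subseteq> P) \<and> (\<forall>B\<in>a. \<forall>B'\<in>a. B \<inter> B' \<noteq> {} \<longrightarrow> B = B')
     \<and> (\<forall>x\<in>P. \<exists>B\<in>a. x \<in> B)"

definition upcl :: "'a set \<Rightarrow> ('a \<Rightarrow> 'a \<Rightarrow> bool) \<Rightarrow> 'a set \<Rightarrow> bool" where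
  "upcl P le T \<longleftrightarrow> (\<forall>x\<in>T. \<forall>y\<in>P. le x y \<longrightarrow> y \<in> T)"

lemma ispart_ne: "ispart P a \<Longrightarrow> B \<in> a \<Longrightarrow> B \<noteq> {}"
  unfolding ispart_def by blast
lemma ispart_sub: "ispart P a \<Longrightarrow> B \<in> a \<Longrightarrow> B \<subseteq> P"
  unfolding ispart_def by blast
lemma ispart_disj: "ispart P a \<Longrightarrow> B \<in> a \<Longrightarrow> B' \<in> a \<Longrightarrow> x \<in> B \<Longrightarrow> x \<in> B' \<Longrightarrow> B = B'"
  unfolding ispart_def by blast
lemma ispart_cover: "ispart P a \<Longrightarrow> x \<in> P \<Longrightarrow> \<exists>B\<in>a. x \<in> B"
  unfolding ispart_def by blast

lemma kern_iff: "B \<in> kern P f \<longleftrightarrow> (\<exists>x\<in>P. B = {y\<in>P. f y = f x})"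
  unfolding kern_def by blast

lemma ispart_kern: "ispart P (kern P f)"
proof -
  have 1: "\<forall>B\<in>kern P f. B \<noteq> {} \<and> B \<subseteq> P"
  proof
    fix B assume "B \<in> kern P f"
    then obtain x where "x \<in> P" "B = {y\<in>P. f y = f x}" unfolding kern_iff by blast
    thus "B \<noteq> {} \<and> B \<subseteq> P" by blast
  qed
  have 2: "\<forall>B\<in>kern P f. \<forall>B'\<in>kern P f. B \<inter> B' \<noteq> {} \<longrightarrow> B = B'"
  proof (intro ballI impI)
    fix B B' assume "B \<in> kern P f" "B' \<in> kern P f" "B \<inter> B' \<noteq> {}"
    then obtain x x' z where "B = {y\<in>P. f y = f x}" "B' = {y\<in>P. f y = f x'}" "z \<in> B" "z \<in> B'"
      unfolding kern_iff by blast
    hence "f x = f x'" by simp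
    thus "B = B'" using \<open>B = _\<close> \<open>B' = _\<close> by simp
  qed
  have 3: "\<forall>x\<in>P. \<exists>B\<in>kern P f. x \<in> B"
  proof
    fix x assume "x \<in> P"
    hence "{y\<in>P. f y = f x} \<in> kern P f" unfolding kern_iff by (intro bexI[of _ x]) simp_all
    moreover have "x \<in> {y\<in>P. f y = f x}" using \<open>x \<in> P\<close> by simp
    ultimately show "\<exists>B\<in>kern P f. x \<in> B" by (rule bexI[rotated])
  qed
  show ?thesis using 1 2 3 unfolding ispart_def by blast
qed

lemma Orp_ispart: "a \<in> Orp P le \<Longrightarrow> ispart P a"
  unfolding Orp_def using ispart_kern by blast

lemma ispart_finite: "finite P \<Longrightarrow> ispart P a \<Longrightarrow> finite a"
  unfolding ispart_def by (meson Pow_iff finite_Pow_iff rev_finite_subset subsetI)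

lemma kern_remove:
  assumes "A \<subseteq> kern P f"
  shows "kern (P - \<Union>A) f = kern P f - A"
proof -
  have ip: "ispart P (kern P f)" by (rule ispart_kern)
  have disj: "B \<inter> \<Union>A = {}" if "B \<in> kern P f" "B \<notin> A" for B
  proof -
    { fix Z z assume "Z \<in> A" "z \<in> B" "z \<in> Z"
      hence "Z \<in> kern P f" using assms by blast
      hence "B = Z" using ip that \<open>z \<in> B\<close> \<open>z \<in> Z\<close> unfolding ispart_def by blast
      hence False using that \<open>Z \<in> A\<close> by simp }
    thus ?thesis by blast
  qed
  show ?thesis
  proof (rule set_eqI, rule iffI)
    fix B assume "B \<in> kern (P - \<Union>A) f"
    then obtain x where x: "x \<in> P - \<Union>A" and B: "B = {y\<in>P - \<Union>A. f y = f x}"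
      unfolding kern_iff by blast
    define F where "F = {y\<in>P. f y = f x}"
    have F: "F \<in> kern P f" using x unfolding F_def kern_iff by blast
    have "x \<in> F" using x by (simp add: F_def)
    hence "F \<notin> A" using x by blast
    hence "F \<inter> \<Union>A = {}" using disj F by blast
    have "B = F - \<Union>A" unfolding B F_def by blast
    hence "B = F" using \<open>F \<inter> \<Union>A = {}\<close> by (simp add: Diff_triv)
    thus "B \<in> kern P f - A" using F \<open>F \<notin> A\<close> by blast
  next
    fix B assume B0: "B \<in> kern P f - A"
    then obtain x where x: "x \<in> P" and B: "B = {y\<in>P. f y = f x}"
      using kern_iff[of B P f] by blast
    have d: "B \<inter> \<Union>A = {}" using disj B0 by blast
    moreover have "x \<in> B" using x by (simp add: B)
    ultimately have "x \<in> P - \<Union>A" using x by blast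
    have "{y\<in>P - \<Union>A. f y = f x} = B - \<Union>A" unfolding B by blast
    hence "B = {y\<in>P - \<Union>A. f y = f x}" using d by (simp add: Diff_triv)
    thus "B \<in> kern (P - \<Union>A) f" unfolding kern_iff using \<open>x \<in> P - \<Union>A\<close> by (intro bexI[of _ x])
  qed
qed

lemma order_pres_mono: "order_pres P le f \<Longrightarrow> Q \<subseteq> P \<Longrightarrow> order_pres Q le f"
  unfolding order_pres_def by blast

lemma Orp_remove:
  assumes "a \<in> Orp P le" "A \<subseteq> a"
  shows "a - A \<in> Orp (P - \<Union>A) le"
proof -
  obtain f where f: "order_pres P le f" "a = kern P f" using assms(1) unfolding Orp_def by blast
  have "a - A = kern (P - \<Union>A) f" using kern_remove[of A P f] f assms(2) by simp
  moreover have "order_pres (P - \<Union>A) le f" using order_pres_mono f by blast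
  ultimately show ?thesis unfolding Orp_def by blast
qed

lemma kern_ext:
  assumes "T \<subseteq> P" "T \<noteq> {}" "\<forall>x\<in>P-T. g x \<noteq> c"
  shows "kern P (\<lambda>x. if x\<in>T then c else g x) = insert T (kern (P-T) g)"
proof (rule set_eqI, rule iffI)
  fix B assume "B \<in> kern P (\<lambda>x. if x\<in>T then c else g x)"
  then obtain x where x: "x \<in> P" and B: "B = {y\<in>P. (if y\<in>T then c else g y) = (if x\<in>T then c else g x)}"
    by (auto simp: kern_iff)
  show "B \<in> insert T (kern (P-T) g)"
  proof (cases "x \<in> T")
    case True
    hence "B = T" using B assms by auto
    thus ?thesis by simp
  next
    case False
    hence "B = {y\<in>P-T. g y = g x}" using B assms x by auto
    moreover have "B \<in> kern (P-T) g" using x False calculation unfolding kern_iff by blast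
    ultimately show ?thesis by blast
  qed
next
  fix B assume "B \<in> insert T (kern (P-T) g)"
  then consider "B = T" | x where "x \<in> P - T" "B = {y\<in>P-T. g y = g x}"
    by (auto simp: kern_iff)
  thus "B \<in> kern P (\<lambda>x. if x\<in>T then c else g x)"
  proof cases
    case 1
    obtain x where "x \<in> T" using assms by blast
    hence "T = {y\<in>P. (if y\<in>T then c else g y) = (if x\<in>T then c else g x)}"
      using assms by auto
    thus ?thesis using 1 \<open>x\<in>T\<close> assms unfolding kern_iff by blast
  next
    case 2
    hence "B = {y\<in>P. (if y\<in>T then c else g y) = (if x\<in>T then c else g x)}"
      using assms by auto
    thus ?thesis using 2 unfolding kern_iff by blast
  qed
qed

lemma Orp_extend:
  assumes "finite P" "b' \<in> Orp (P - T) le" "T \<subseteq> P" "T \<noteq> {}" "upcl P le T"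
  shows "insert T b' \<in> Orp P le"
proof -
  obtain g where g: "order_pres (P-T) le g" "b' = kern (P-T) g" using assms(2) unfolding Orp_def by blast
  define c where "c = Suc (Max (insert 0 (g ` (P-T))))"
  have gc: "g x < c" if "x \<in> P - T" for x
    unfolding c_def using assms(1) that by (simp add: le_imp_less_Suc)
  define f where "f = (\<lambda>x. if x\<in>T then c else g x)"
  have "kern P f = insert T b'" unfolding f_def g(2)
    by (rule kern_ext) (use assms gc in \<open>auto\<close>)
  moreover have "order_pres P le f"
    unfolding order_pres_def f_def
  proof (intro ballI impI)
    fix x y assume xy: "x \<in> P" "y \<in> P" "le x y"
    show "(if x\<in>T then c else g x) \<le> (if y\<in>T then c else g y)"
    proof (cases "x \<in> T")
      case True
      hence "y \<in> T" using assms(5) xy unfolding upcl_def by blast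
      thus ?thesis using True by simp
    next
      case False
      thus ?thesis using gc[of x] xy g(1) unfolding order_pres_def
        by (cases "y \<in> T") auto
    qed
  qed
  ultimately show ?thesis unfolding Orp_def by blast
qed


lemma pr_union: "part_restr (a \<union> a') C = part_restr a C \<union> part_restr a' C"
  unfolding part_restr_def by blast

lemma pr_insert: "part_restr (insert T a) C =
   (if T \<inter> C = {} then part_restr a C else insert (T \<inter> C) (part_restr a C))"
  unfolding part_restr_def by auto

lemma pr_none: "(\<forall>B\<in>A. B \<inter> C = {}) \<Longrightarrow> part_restr A C = {}"
  unfolding part_restr_def by auto

lemma pr_sub: "(\<forall>B\<in>a. B \<subseteq> Q) \<Longrightarrow> part_restr a C = part_restr a (C \<inter> Q)"
  unfolding part_restr_def
proof -
  assume "\<forall>B\<in>a. B \<subseteq> Q"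
  hence "{B \<inter> C |B. B \<in> a} = {B \<inter> (C \<inter> Q) |B. B \<in> a}"
    by (smt (verit, best) Collect_cong Int_absorb2 Int_assoc Int_commute)
  thus "{B \<inter> C |B. B \<in> a} - {{}} = {B \<inter> (C \<inter> Q) |B. B \<in> a} - {{}}" by simp
qed

lemma pr_remove: "(\<forall>B\<in>A. B \<inter> C = {}) \<Longrightarrow> part_restr (a - A) C = part_restr a C"
proof -
  assume h: "\<forall>B\<in>A. B \<inter> C = {}"
  have "a = (a - A) \<union> (a \<inter> A)" by blast
  hence "part_restr a C = part_restr (a - A) C \<union> part_restr (a \<inter> A) C"
    using pr_union by metis
  moreover have "part_restr (a \<inter> A) C = {}" using h by (intro pr_none) blast
  ultimately show ?thesis by simp
qed

lemma chain_sub: "is_chain (P - T) le C \<Longrightarrow> is_chain P le C"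
  unfolding is_chain_def by blast

lemma chain_diff: "is_chain P le C \<Longrightarrow> is_chain (P - T) le (C - T)"
  unfolding is_chain_def by blast

lemma anc_Orp: "b \<in> anc P le a \<Longrightarrow> b \<in> Orp P le"
  unfolding anc_def by blast

lemma Rem_fwd:
  assumes "a \<in> Orp P le" "A \<subseteq> a" "T = \<Union>A"
    and "b \<in> anc P le a" "T \<in> b"
  shows "b - {T} \<in> anc (P - T) le (a - A)"
proof -
  have ipa: "ispart P a" using assms(1) by (rule Orp_ispart)
  have bO: "b \<in> Orp P le" and ref: "refines a b"
    and ch: "\<forall>C. is_chain P le C \<longrightarrow> part_restr b C = part_restr a C"
    using assms(4) unfolding anc_def by blast+
  have "b - {T} \<in> Orp (P - \<Union>{T}) le" using Orp_remove[OF bO] assms(5) by blast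
  hence O: "b - {T} \<in> Orp (P - T) le" by simp
  have R: "refines (a - A) (b - {T})"
    unfolding refines_def
  proof
    fix B assume B: "B \<in> a - A"
    then obtain B' where B': "B' \<in> b" "B \<subseteq> B'" using ref unfolding refines_def by blast
    have "B' \<noteq> T"
    proof
      assume "B' = T"
      have "B \<noteq> {}" using B ipa ispart_ne by blast
      then obtain z where z: "z \<in> B" by blast
      hence "z \<in> T" using B' \<open>B' = T\<close> by blast
      then obtain Z where Z: "Z \<in> A" "z \<in> Z" using assms(3) by blast
      have "B \<in> a" "Z \<in> a" using B Z assms(2) by blast+
      hence "B = Z" using ispart_disj[OF ipa] z Z by blast
      thus False using B Z by blast
    qed
    thus "\<exists>B'\<in>b - {T}. B \<subseteq> B'" using B' by blast
  qed
  have C: "part_restr (b - {T}) C = part_restr (a - A) C" if "is_chain (P - T) le C" for C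
  proof -
    have CP: "is_chain P le C" using chain_sub that by blast
    have CT: "C \<inter> T = {}" using that unfolding is_chain_def by blast
    have "part_restr (b - {T}) C = part_restr b C" using CT by (intro pr_remove) blast
    also have "\<dots> = part_restr a C" using ch CP by blast
    also have "\<dots> = part_restr (a - A) C" using CT assms(3) by (intro pr_remove[symmetric]) blast
    finally show ?thesis .
  qed
  show ?thesis unfolding anc_def using O R C by blast
qed

lemma Rem_bwd:
  assumes "finite P" "a \<in> Orp P le" "A \<subseteq> a" "A \<noteq> {}" "T = \<Union>A" "upcl P le T"
    and one: "\<forall>C. is_chain P le C \<longrightarrow> (\<forall>Z\<in>A. \<forall>Z'\<in>A. Z \<inter> C \<noteq> {} \<longrightarrow> Z' \<inter> C \<noteq> {} \<longrightarrow> Z = Z')"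
    and "b' \<in> anc (P - T) le (a - A)"
  shows "insert T b' \<in> anc P le a" "T \<notin> b'"
proof -
  have ipa: "ispart P a" using assms(2) by (rule Orp_ispart)
  have bO: "b' \<in> Orp (P - T) le" and ref: "refines (a - A) b'"
    and ch: "\<forall>C. is_chain (P - T) le C \<longrightarrow> part_restr b' C = part_restr (a - A) C"
    using assms(8) unfolding anc_def by blast+
  have ipb: "ispart (P - T) b'" using bO by (rule Orp_ispart)
  have TP: "T \<subseteq> P" using ispart_sub[OF ipa] assms(3,5) by blast
  have Tne: "T \<noteq> {}"
  proof -
    obtain Z where "Z \<in> A" using assms(4) by blast
    hence "Z \<noteq> {}" "Z \<subseteq> T" using ispart_ne[OF ipa] assms(3,5) by blast+
    thus ?thesis by blast
  qed
  show TN: "T \<notin> b'"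
  proof
    assume "T \<in> b'"
    hence "T \<subseteq> P - T" using ipb ispart_sub by blast
    thus False using Tne by blast
  qed
  have O: "insert T b' \<in> Orp P le" using Orp_extend[OF assms(1) bO TP Tne assms(6)] .
  have R: "refines a (insert T b')"
    unfolding refines_def
  proof
    fix B assume B: "B \<in> a"
    show "\<exists>B'\<in>insert T b'. B \<subseteq> B'"
    proof (cases "B \<in> A")
      case True thus ?thesis using assms(5) by blast
    next
      case False
      hence "B \<in> a - A" using B by blast
      thus ?thesis using ref unfolding refines_def by blast
    qed
  qed
  have C: "part_restr (insert T b') C = part_restr a C" if CP: "is_chain P le C" for C
  proof -
    have C': "is_chain (P - T) le (C - T)" using chain_diff CP by blast
    have bsub: "\<forall>B\<in>b'. B \<subseteq> P - T" using ispart_sub[OF ipb] by blast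
    have asub: "\<forall>B\<in>a - A. B \<subseteq> P - T"
    proof
      fix B assume B: "B \<in> a - A"
      have "B \<inter> T = {}"
      proof -
        { fix z Z assume "z \<in> B" "Z \<in> A" "z \<in> Z"
          hence "B = Z" using ispart_disj[OF ipa, of B Z z] B assms(3) by blast
          hence False using B \<open>Z \<in> A\<close> by blast }
        thus ?thesis using assms(5) by blast
      qed
      thus "B \<subseteq> P - T" using ispart_sub[OF ipa, of B] B by blast
    qed
    have e1: "part_restr b' C = part_restr (a - A) C"
    proof -
      have "part_restr b' C = part_restr b' (C \<inter> (P - T))" using pr_sub bsub by blast
      also have "C \<inter> (P - T) = C - T" using CP unfolding is_chain_def by blast
      also have "part_restr b' (C - T) = part_restr (a - A) (C - T)" using ch C' by blast
      also have "C - T = C \<inter> (P - T)" using CP unfolding is_chain_def by blast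
      also have "part_restr (a - A) (C \<inter> (P - T)) = part_restr (a - A) C"
        using pr_sub[OF asub] by simp
      finally show ?thesis .
    qed
    have e2: "part_restr A C = (if T \<inter> C = {} then {} else {T \<inter> C})"
    proof (cases "T \<inter> C = {}")
      case True
      hence "part_restr A C = {}" using assms(5) by (intro pr_none) blast
      thus ?thesis using True by simp
    next
      case False
      then obtain Z z where Z: "Z \<in> A" "z \<in> Z" "z \<in> C" using assms(5) by blast
      have oth: "Z' \<inter> C = {}" if "Z' \<in> A" "Z' \<noteq> Z" for Z'
        using one CP Z that by blast
      have TC: "T \<inter> C = Z \<inter> C"
      proof
        show "T \<inter> C \<subseteq> Z \<inter> C" using oth assms(5) by blast
        show "Z \<inter> C \<subseteq> T \<inter> C" using Z assms(5) by blast
      qed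
      have "part_restr A C = {Z \<inter> C}"
      proof
        show "part_restr A C \<subseteq> {Z \<inter> C}"
          unfolding part_restr_def using oth by blast
        have "Z \<inter> C \<noteq> {}" using Z by blast
        thus "{Z \<inter> C} \<subseteq> part_restr A C"
          unfolding part_restr_def using Z(1) by blast
      qed
      thus ?thesis using TC False by simp
    qed
    have "a = (a - A) \<union> A" using assms(3) by blast
    hence "part_restr a C = part_restr (a - A) C \<union> part_restr A C" using pr_union by metis
    thus ?thesis using e1 e2 pr_insert[of T b' C] by auto
  qed
  show "insert T b' \<in> anc P le a" unfolding anc_def using O R C by blast
qed

lemma Rem_bij:
  assumes "finite P" "a \<in> Orp P le" "A \<subseteq> a" "A \<noteq> {}" "T = \<Union>A" "upcl P le T"
    and one: "\<forall>C. is_chain P le C \<longrightarrow> (\<forall>Z\<in>A. \<forall>Z'\<in>A. Z \<inter> C \<noteq> {} \<longrightarrow> Z' \<inter> C \<noteq> {} \<longrightarrow> Z = Z')"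
  shows "bij_betw (\<lambda>b. b - {T}) {b \<in> anc P le a. T \<in> b \<and> Q (b - {T})} {b' \<in> anc (P - T) le (a - A). Q b'}"
proof (rule bij_betw_byWitness[where f'="insert T"])
  show "\<forall>b\<in>{b \<in> anc P le a. T \<in> b \<and> Q (b - {T})}. insert T (b - {T}) = b" by blast
  show "\<forall>b'\<in>{b' \<in> anc (P - T) le (a - A). Q b'}. insert T b' - {T} = b'"
    using Rem_bwd(2)[OF assms] by blast
  show "(\<lambda>b. b - {T}) ` {b \<in> anc P le a. T \<in> b \<and> Q (b - {T})} \<subseteq> {b' \<in> anc (P - T) le (a - A). Q b'}"
    using Rem_fwd[OF assms(2,3,5)] by blast
  show "insert T ` {b' \<in> anc (P - T) le (a - A). Q b'} \<subseteq> {b \<in> anc P le a. T \<in> b \<and> Q (b - {T})}"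
  proof
    fix b assume "b \<in> insert T ` {b' \<in> anc (P - T) le (a - A). Q b'}"
    then obtain b' where b': "b' \<in> anc (P - T) le (a - A)" "Q b'" "b = insert T b'" by blast
    have "insert T b' - {T} = b'" using Rem_bwd(2)[OF assms b'(1)] by blast
    thus "b \<in> {b \<in> anc P le a. T \<in> b \<and> Q (b - {T})}"
      using Rem_bwd(1)[OF assms b'(1)] b' by simp
  qed
qed

lemma Rem_sum:
  assumes "finite P" "a \<in> Orp P le" "A \<subseteq> a" "A \<noteq> {}" "T = \<Union>A" "upcl P le T"
    and one: "\<forall>C. is_chain P le C \<longrightarrow> (\<forall>Z\<in>A. \<forall>Z'\<in>A. Z \<inter> C \<noteq> {} \<longrightarrow> Z' \<inter> C \<noteq> {} \<longrightarrow> Z = Z')"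
  shows "(\<Sum>b\<in>{b \<in> anc P le a. T \<in> b \<and> Q (b - {T})}. (\<phi> b :: 'b::comm_monoid_add))
       = (\<Sum>b'\<in>{b' \<in> anc (P - T) le (a - A). Q b'}. \<phi> (insert T b'))"
proof -
  have bij: "bij_betw (\<lambda>b. b - {T}) {b \<in> anc P le a. T \<in> b \<and> Q (b - {T})} {b' \<in> anc (P - T) le (a - A). Q b'}"
    by (rule Rem_bij[OF assms])
  have "(\<Sum>b\<in>{b \<in> anc P le a. T \<in> b \<and> Q (b - {T})}. \<phi> (insert T (b - {T})))
       = (\<Sum>b'\<in>{b' \<in> anc (P - T) le (a - A). Q b'}. \<phi> (insert T b'))"
    by (rule sum.reindex_bij_betw[OF bij])
  moreover have "(\<Sum>b\<in>{b \<in> anc P le a. T \<in> b \<and> Q (b - {T})}. \<phi> (insert T (b - {T})))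
       = (\<Sum>b\<in>{b \<in> anc P le a. T \<in> b \<and> Q (b - {T})}. \<phi> b)"
    by (rule sum.cong) (auto simp: insert_absorb)
  ultimately show ?thesis by simp
qed

lemma Rem_card:
  assumes "finite P" "a \<in> Orp P le" "A \<subseteq> a" "A \<noteq> {}" "T = \<Union>A" "upcl P le T"
    and one: "\<forall>C. is_chain P le C \<longrightarrow> (\<forall>Z\<in>A. \<forall>Z'\<in>A. Z \<inter> C \<noteq> {} \<longrightarrow> Z' \<inter> C \<noteq> {} \<longrightarrow> Z = Z')"
  shows "card {b \<in> anc P le a. T \<in> b \<and> Q (b - {T})} = card {b' \<in> anc (P - T) le (a - A). Q b'}"
  using Rem_bij[OF assms] bij_betw_same_card by blast


lemma card_kern:
  assumes "finite P"
  shows "card (kern P f) = card (f ` P)"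
proof -
  have "bij_betw (\<lambda>u. {x\<in>P. f x = u}) (f ` P) (kern P f)"
  proof (rule bij_betwI')
    fix u v assume "u \<in> f ` P" "v \<in> f ` P"
    then obtain x y where "x \<in> P" "u = f x" "y \<in> P" "v = f y" by blast
    thus "({x \<in> P. f x = u} = {x \<in> P. f x = v}) = (u = v)" by blast
  next
    fix u assume "u \<in> f ` P"
    then obtain x where "x \<in> P" "u = f x" by blast
    thus "{x \<in> P. f x = u} \<in> kern P f" unfolding kern_iff by (intro bexI[of _ x]) simp_all
  next
    fix B assume "B \<in> kern P f"
    then obtain x where "x \<in> P" "B = {y\<in>P. f y = f x}" unfolding kern_iff by blast
    thus "\<exists>u\<in>f ` P. B = {x \<in> P. f x = u}" by blast
  qed
  thus ?thesis by (simp add: bij_betw_same_card)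
qed

lemma kern_cong: "(\<And>x. x \<in> P \<Longrightarrow> f x = g x) \<Longrightarrow> kern P f = kern P g"
proof -
  assume h: "\<And>x. x \<in> P \<Longrightarrow> f x = g x"
  have "\<And>u. {x\<in>P. f x = u} = {x\<in>P. g x = u}" using h by auto
  thus ?thesis unfolding kern_def by simp
qed

definition FF :: "'a set \<Rightarrow> ('a \<Rightarrow> 'a \<Rightarrow> bool) \<Rightarrow> 'a set set \<Rightarrow> ('a \<Rightarrow> nat) set" where
  "FF P le a = {f \<in> P \<rightarrow>\<^sub>E {1..card a}. order_pres P le f \<and> kern P f = a}"

lemma opfact_FF: "opfact P le a = card (FF P le a)"
  unfolding opfact_def FF_def ..

lemma FF_finite: "finite P \<Longrightarrow> finite (FF P le a)"
  unfolding FF_def by (rule finite_subset[of _ "P \<rightarrow>\<^sub>E {1..card a}"]) (auto intro: finite_PiE)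

lemma FF_top:
  assumes "finite P" "f \<in> FF P le a" "P \<noteq> {}"
  shows "\<exists>x\<in>P. f x = card a"
proof -
  have f: "f \<in> P \<rightarrow>\<^sub>E {1..card a}" "kern P f = a" using assms(2) unfolding FF_def by blast+
  have sub: "f ` P \<subseteq> {1..card a}" using f(1) by auto
  have "card (f ` P) = card a" using card_kern[OF assms(1), of f] f(2) by simp
  hence "f ` P = {1..card a}" using sub by (intro card_subset_eq) auto
  moreover have "card a \<noteq> 0"
  proof
    assume "card a = 0"
    hence "f ` P = {}" using \<open>f ` P = {1..card a}\<close> by simp
    thus False using assms(3) by blast
  qed
  ultimately have "card a \<in> f ` P" by simp
  thus ?thesis by (metis imageE)
qed

lemma OF:
  assumes fin: "finite P" and ne: "P \<noteq> {}" and aO: "a \<in> Orp P le"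
  shows "opfact P le a = (\<Sum>T\<in>{T\<in>a. upcl P le T}. opfact (P - T) le (a - {T}))"
proof -
  have ipa: "ispart P a" using aO by (rule Orp_ispart)
  have fina: "finite a" using ispart_finite[OF fin ipa] .
  define k where "k = card a"
  define U where "U = {T\<in>a. upcl P le T}"
  define G where "G T = {f\<in>FF P le a. {x\<in>P. f x = k} = T}" for T
  have FU: "FF P le a = (\<Union>T\<in>U. G T)"
  proof
    show "FF P le a \<subseteq> (\<Union>T\<in>U. G T)"
    proof
      fix f assume fF: "f \<in> FF P le a"
      have f: "f \<in> P \<rightarrow>\<^sub>E {1..card a}" "kern P f = a" "order_pres P le f" using fF unfolding FF_def by blast+
      obtain x where x: "x \<in> P" "f x = k" using FF_top[OF fin fF ne] k_def by blast
      define T where "T = {y\<in>P. f y = k}"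
      have "T \<in> a" unfolding T_def f(2)[symmetric] kern_iff using x by (intro bexI[of _ x]) simp_all
      moreover have "upcl P le T"
        unfolding upcl_def
      proof (intro ballI impI)
        fix y z assume "y \<in> T" "z \<in> P" "le y z"
        hence "k \<le> f z" using f(3) unfolding order_pres_def T_def by force
        moreover have "f z \<le> k" using f(1) \<open>z \<in> P\<close> k_def by auto
        ultimately show "z \<in> T" using \<open>z \<in> P\<close> unfolding T_def by simp
      qed
      ultimately have "T \<in> U" unfolding U_def by blast
      moreover have "f \<in> G T" unfolding G_def T_def using fF by blast
      ultimately show "f \<in> (\<Union>T\<in>U. G T)" by blast
    qed
    show "(\<Union>T\<in>U. G T) \<subseteq> FF P le a" unfolding G_def by blast
  qed
  have cardF: "card (FF P le a) = (\<Sum>T\<in>U. card (G T))"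
    unfolding FU
  proof (rule card_UN_disjoint)
    show "finite U" unfolding U_def using fina by simp
    show "\<forall>i\<in>U. finite (G i)" unfolding G_def using FF_finite[OF fin] by simp
    show "\<forall>i\<in>U. \<forall>j\<in>U. i \<noteq> j \<longrightarrow> G i \<inter> G j = {}" unfolding G_def by blast
  qed
  have cardG: "card (G T) = card (FF (P - T) le (a - {T}))" if TU: "T \<in> U" for T
  proof -
    have Ta: "T \<in> a" and Tup: "upcl P le T" using TU unfolding U_def by blast+
    have TP: "T \<subseteq> P" using ispart_sub[OF ipa Ta] .
    have Tne: "T \<noteq> {}" using ispart_ne[OF ipa Ta] .
    have ka: "card (a - {T}) = k - 1" using fina Ta k_def by simp
    have "card a > 0" using fina Ta card_gt_0_iff by blast
    hence k1: "k \<ge> 1" unfolding k_def by simp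
    define ext where "ext g = (\<lambda>x. if x \<in> T then k else g x)" for g :: "'a \<Rightarrow> nat"
    show ?thesis
    proof (rule bij_betw_same_card[of "\<lambda>f. restrict f (P - T)"], rule bij_betw_byWitness[where f'=ext])
      show "\<forall>f\<in>G T. ext (restrict f (P - T)) = f"
      proof
        fix f assume fG: "f \<in> G T"
        have f: "f \<in> P \<rightarrow>\<^sub>E {1..card a}" "{x\<in>P. f x = k} = T" using fG unfolding G_def FF_def by blast+
        show "ext (restrict f (P - T)) = f"
        proof
          fix x show "ext (restrict f (P - T)) x = f x"
            unfolding ext_def using f TP by (cases "x \<in> P") (auto simp: PiE_def extensional_def)
        qed
      qed
      show "\<forall>g\<in>FF (P - T) le (a - {T}). restrict (ext g) (P - T) = g"
      proof
        fix g assume "g \<in> FF (P - T) le (a - {T})"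
        hence g: "g \<in> (P - T) \<rightarrow>\<^sub>E {1..k-1}" unfolding FF_def ka by blast
        show "restrict (ext g) (P - T) = g"
        proof
          fix x show "restrict (ext g) (P - T) x = g x"
            unfolding ext_def using g by (cases "x \<in> P - T") (auto simp: PiE_def extensional_def)
        qed
      qed
      show "(\<lambda>f. restrict f (P - T)) ` G T \<subseteq> FF (P - T) le (a - {T})"
      proof
        fix h assume "h \<in> (\<lambda>f. restrict f (P - T)) ` G T"
        then obtain f where fG: "f \<in> G T" and h: "h = restrict f (P - T)" by blast
        have f: "f \<in> P \<rightarrow>\<^sub>E {1..k}" "{x\<in>P. f x = k} = T" "order_pres P le f" "kern P f = a"
          using fG unfolding G_def FF_def k_def by blast+
        have "h \<in> (P - T) \<rightarrow>\<^sub>E {1..k-1}"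
        proof -
          have "f x \<in> {1..k-1}" if "x \<in> P - T" for x
          proof -
            have "f x \<in> {1..k}" using f(1) that by auto
            moreover have "f x \<noteq> k" using f(2) that by blast
            ultimately show ?thesis by auto
          qed
          thus ?thesis unfolding h by auto
        qed
        moreover have "order_pres (P - T) le h"
          using f(3) unfolding h order_pres_def by auto
        moreover have "kern (P - T) h = a - {T}"
        proof -
          have "kern (P - T) h = kern (P - T) f" unfolding h by (rule kern_cong) simp
          also have "\<dots> = kern (P - \<Union>{T}) f" by simp
          also have "\<dots> = kern P f - {T}" using Ta f(4) by (intro kern_remove) simp
          finally show ?thesis using f(4) by simp
        qed
        ultimately show "h \<in> FF (P - T) le (a - {T})" unfolding FF_def ka by blast
      qed
      show "ext ` FF (P - T) le (a - {T}) \<subseteq> G T"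
      proof
        fix h assume "h \<in> ext ` FF (P - T) le (a - {T})"
        then obtain g where gF: "g \<in> FF (P - T) le (a - {T})" and h: "h = ext g" by blast
        have g: "g \<in> (P - T) \<rightarrow>\<^sub>E {1..k-1}" "order_pres (P - T) le g" "kern (P - T) g = a - {T}"
          using gF unfolding FF_def ka by blast+
        have gk: "\<forall>x\<in>P - T. g x \<noteq> k"
        proof
          fix x assume "x \<in> P - T"
          hence "g x \<in> {1..k-1}" using g(1) by auto
          thus "g x \<noteq> k" using k1 by auto
        qed
        have "h \<in> P \<rightarrow>\<^sub>E {1..k}"
        proof -
          have "h x \<in> {1..k}" if "x \<in> P" for x
          proof (cases "x \<in> T")
            case True thus ?thesis unfolding h ext_def using k1 by simp
          next
            case False
            hence "g x \<in> {1..k-1}" using g(1) that by auto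
            thus ?thesis unfolding h ext_def using False by auto
          qed
          moreover have "h x = undefined" if "x \<notin> P" for x
            using that TP g(1) unfolding h ext_def by (auto simp: PiE_def extensional_def)
          ultimately show ?thesis by (auto simp: PiE_def extensional_def)
        qed
        moreover have "order_pres P le h"
          unfolding order_pres_def
        proof (intro ballI impI)
          fix x y assume xy: "x \<in> P" "y \<in> P" "le x y"
          show "h x \<le> h y"
          proof (cases "x \<in> T")
            case True
            hence "y \<in> T" using Tup xy unfolding upcl_def by blast
            thus ?thesis using True unfolding h ext_def by simp
          next
            case False
            show ?thesis
            proof (cases "y \<in> T")
              case True
              have "g x \<in> {1..k-1}" using g(1) xy False by auto
              thus ?thesis using True False unfolding h ext_def by auto
            next
              case False2: False
              thus ?thesis using False xy g(2) unfolding h ext_def order_pres_def by auto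
            qed
          qed
        qed
        moreover have "kern P h = a"
        proof -
          have "kern P h = insert T (kern (P - T) g)" unfolding h ext_def
            by (rule kern_ext[OF TP Tne gk])
          thus ?thesis using g(3) Ta by auto
        qed
        moreover have "{x\<in>P. h x = k} = T"
          using TP gk unfolding h ext_def by auto
        ultimately show "h \<in> G T" unfolding G_def FF_def k_def by blast
      qed
    qed
  qed
  show ?thesis
    unfolding opfact_FF cardF U_def[symmetric] using cardG by (intro sum.cong) auto
qed


definition twoch :: "'a set \<Rightarrow> ('a \<Rightarrow> 'a \<Rightarrow> bool) \<Rightarrow> 'a set \<Rightarrow> 'a set \<Rightarrow> bool" where
  "twoch P le C1 C2 \<longleftrightarrow> finite P \<and> poset_on P le \<and> P = C1 \<union> C2 \<and> C1 \<inter> C2 = {}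
     \<and> is_chain P le C1 \<and> is_chain P le C2 \<and> (\<forall>x\<in>C1. \<forall>y\<in>C2. \<not> le x y \<and> \<not> le y x)"

lemma twoch_sym: "twoch P le C1 C2 \<Longrightarrow> twoch P le C2 C1"
  unfolding twoch_def by blast

lemma poset_sub: "poset_on P le \<Longrightarrow> Q \<subseteq> P \<Longrightarrow> poset_on Q le"
  unfolding poset_on_def by (meson subsetD)

lemma twoch_remove:
  assumes "twoch P le C1 C2" shows "twoch (P - T) le (C1 - T) (C2 - T)"
proof -
  have a: "finite P" "poset_on P le" "P = C1 \<union> C2" "C1 \<inter> C2 = {}" "is_chain P le C1" "is_chain P le C2"
    "\<forall>x\<in>C1. \<forall>y\<in>C2. \<not> le x y \<and> \<not> le y x" using assms unfolding twoch_def by blast+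
  have "finite (P - T)" using a(1) by simp
  moreover have "poset_on (P - T) le" using poset_sub[OF a(2)] by blast
  moreover have "P - T = (C1 - T) \<union> (C2 - T)" using a(3) by blast
  moreover have "(C1 - T) \<inter> (C2 - T) = {}" using a(4) by blast
  moreover have "is_chain (P - T) le (C1 - T)" using chain_diff[OF a(5)] .
  moreover have "is_chain (P - T) le (C2 - T)" using chain_diff[OF a(6)] .
  moreover have "\<forall>x\<in>C1 - T. \<forall>y\<in>C2 - T. \<not> le x y \<and> \<not> le y x" using a(7) by blast
  ultimately show ?thesis unfolding twoch_def by blast
qed

lemma twoch_finite: "twoch P le C1 C2 \<Longrightarrow> finite P"
  unfolding twoch_def by blast

lemma twoch_incomp: "twoch P le C1 C2 \<Longrightarrow> x \<in> C1 \<Longrightarrow> y \<in> C2 \<Longrightarrow> \<not> le x y \<and> \<not> le y x"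
  unfolding twoch_def by blast

lemma twoch_P: "twoch P le C1 C2 \<Longrightarrow> P = C1 \<union> C2"
  unfolding twoch_def by blast

lemma twoch_disj: "twoch P le C1 C2 \<Longrightarrow> C1 \<inter> C2 = {}"
  unfolding twoch_def by blast

lemma poset_refl: "poset_on P le \<Longrightarrow> x \<in> P \<Longrightarrow> le x x"
  unfolding poset_on_def by blast
lemma poset_trans: "poset_on P le \<Longrightarrow> x \<in> P \<Longrightarrow> y \<in> P \<Longrightarrow> z \<in> P \<Longrightarrow> le x y \<Longrightarrow> le y z \<Longrightarrow> le x z"
  unfolding poset_on_def by blast
lemma poset_antisym: "poset_on P le \<Longrightarrow> x \<in> P \<Longrightarrow> y \<in> P \<Longrightarrow> le x y \<Longrightarrow> le y x \<Longrightarrow> x = y"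
  unfolding poset_on_def by blast
lemma chain_tot: "is_chain P le C \<Longrightarrow> x \<in> C \<Longrightarrow> y \<in> C \<Longrightarrow> le x y \<or> le y x"
  unfolding is_chain_def by blast
lemma chain_subP: "is_chain P le C \<Longrightarrow> C \<subseteq> P"
  unfolding is_chain_def by blast

lemma chain_max:
  assumes "finite C" "C \<noteq> {}" "poset_on P le" "is_chain P le C"
  shows "\<exists>m\<in>C. \<forall>z\<in>C. le z m"
  using assms
proof (induction C rule: finite_ne_induct)
  case (singleton x)
  have "x \<in> P" using chain_subP[OF singleton(2)] by blast
  hence "le x x" using poset_refl[OF singleton(1)] by blast
  thus ?case by blast
next
  case (insert x F)
  have "is_chain P le F" using insert.prems unfolding is_chain_def by blast
  then obtain m where m: "m \<in> F" "\<forall>z\<in>F. le z m" using insert.IH insert.prems by blast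
  have FP: "insert x F \<subseteq> P" using chain_subP[OF insert.prems(2)] .
  have xP: "x \<in> P" and mP: "m \<in> P" using FP m by blast+
  have tot: "le m x \<or> le x m" using chain_tot[OF insert.prems(2), of m x] m by blast
  show ?case
  proof (cases "le x m")
    case True thus ?thesis using m by blast
  next
    case False
    hence "le m x" using tot by blast
    have "le z x" if "z \<in> insert x F" for z
    proof (cases "z = x")
      case True thus ?thesis using xP poset_refl[OF insert.prems(1)] by blast
    next
      case False
      hence "z \<in> F" using that by blast
      hence "le z m" using m by blast
      moreover have "z \<in> P" using \<open>z \<in> F\<close> FP by blast
      ultimately show ?thesis using \<open>le m x\<close> xP mP poset_trans[OF insert.prems(1)] by blast
    qed
    thus ?thesis by blast
  qed
qed

lemma twoch_max1:
  assumes "twoch P le C1 C2" "C1 \<noteq> {}"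
  shows "\<exists>m\<in>C1. \<forall>z\<in>C1. le z m"
proof -
  have "finite C1" using assms(1) unfolding twoch_def by (meson finite_Un)
  thus ?thesis using chain_max assms unfolding twoch_def by blast
qed

lemma chains_in:
  assumes "twoch P le C1 C2" "is_chain P le C"
  shows "C \<subseteq> C1 \<or> C \<subseteq> C2"
proof (rule ccontr)
  assume "\<not> (C \<subseteq> C1 \<or> C \<subseteq> C2)"
  then obtain x y where "x \<in> C" "x \<notin> C1" "y \<in> C" "y \<notin> C2" by blast
  moreover have "C \<subseteq> C1 \<union> C2" using assms unfolding twoch_def is_chain_def by blast
  ultimately have "x \<in> C2" "y \<in> C1" by blast+
  moreover have "le x y \<or> le y x" using assms(2) \<open>x \<in> C\<close> \<open>y \<in> C\<close> unfolding is_chain_def by blast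
  ultimately show False using twoch_incomp[OF assms(1)] by blast
qed

lemma kern_convex:
  assumes "a \<in> Orp P le" "Z \<in> a" "x \<in> Z" "z \<in> Z" "y \<in> P" "le x y" "le y z"
  shows "y \<in> Z"
proof -
  obtain f where f: "order_pres P le f" "a = kern P f" using assms(1) unfolding Orp_def by blast
  have "Z \<in> kern P f" using assms(2) f(2) by simp
  then obtain w where w: "w \<in> P" "Z = {u\<in>P. f u = f w}" unfolding kern_iff by blast
  have "x \<in> P" "z \<in> P" "f x = f w" "f z = f w" using assms(3,4) w(2) by simp_all
  moreover have "f x \<le> f y" "f y \<le> f z" using f(1) assms(5,6,7) calculation unfolding order_pres_def by blast+
  ultimately show ?thesis using w assms(5) by simp
qed

lemma pure_up:
  assumes tc: "twoch P le C1 C2" and aO: "a \<in> Orp P le" and Z: "Z \<in> a" "Z \<subseteq> C2"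
    and m: "m \<in> Z" "\<forall>z\<in>C2. le z m"
  shows "upcl P le Z"
  unfolding upcl_def
proof (intro ballI impI)
  fix x y assume xy: "x \<in> Z" "y \<in> P" "le x y"
  have "x \<in> C2" using xy Z by blast
  hence "y \<notin> C1" using twoch_incomp[OF tc] xy by blast
  hence "y \<in> C2" using xy twoch_P[OF tc] by blast
  hence "le y m" using m by blast
  thus "y \<in> Z" using kern_convex[OF aO Z(1) xy(1) m(1) xy(2,3)] by blast
qed

lemma up_meet:
  assumes tc: "twoch P le C1 C2" and T: "upcl P le T" and z: "z \<in> T" "z \<in> C1"
    and m: "m \<in> C1" "\<forall>w\<in>C1. le w m"
  shows "m \<in> T"
proof -
  have "m \<in> P" using m twoch_P[OF tc] by blast
  thus ?thesis using T z m unfolding upcl_def by blast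
qed

lemma Orp_top:
  assumes "finite P" "P \<noteq> {}" "b \<in> Orp P le"
  shows "\<exists>T\<in>b. upcl P le T"
proof -
  obtain f where f: "order_pres P le f" "b = kern P f" using assms(3) unfolding Orp_def by blast
  define M where "M = Max (f ` P)"
  have "M \<in> f ` P" unfolding M_def using assms by simp
  then obtain x where x: "x \<in> P" "f x = M" by blast
  define T where "T = {y\<in>P. f y = M}"
  have "T \<in> b" unfolding f(2) kern_iff T_def using x by (intro bexI[of _ x]) simp_all
  moreover have "upcl P le T"
    unfolding upcl_def
  proof (intro ballI impI)
    fix y z assume "y \<in> T" "z \<in> P" "le y z"
    hence "M \<le> f z" using f(1) unfolding order_pres_def T_def by force
    moreover have "f z \<le> M" unfolding M_def using assms(1) \<open>z \<in> P\<close> by simp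
    ultimately show "z \<in> T" unfolding T_def using \<open>z \<in> P\<close> by simp
  qed
  ultimately show ?thesis by blast
qed

lemma anc_ref:
  assumes "b \<in> anc P le a" "Z \<in> a" "B \<in> b" "x \<in> Z" "x \<in> B"
  shows "Z \<subseteq> B"
proof -
  have "refines a b" "b \<in> Orp P le" using assms(1) unfolding anc_def by blast+
  then obtain B' where "B' \<in> b" "Z \<subseteq> B'" using assms(2) unfolding refines_def by blast
  moreover have "ispart P b" using \<open>b \<in> Orp P le\<close> by (rule Orp_ispart)
  moreover have "x \<in> B'" using \<open>Z \<subseteq> B'\<close> assms(4) by blast
  ultimately have "B' = B" using ispart_disj[of P b B' B x] assms(3,5) by blast
  thus ?thesis using \<open>Z \<subseteq> B'\<close> by simp
qed

lemma anc_blk: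
  assumes "a \<in> Orp P le" "b \<in> anc P le a" "B \<in> b" "Z \<in> a" "x \<in> B" "x \<in> Z" "x \<in> C" "is_chain P le C"
  shows "B \<inter> C = Z \<inter> C"
proof -
  have "part_restr b C = part_restr a C" using assms(2,8) unfolding anc_def by blast
  moreover have "B \<inter> C \<in> part_restr b C" unfolding part_restr_def using assms(3,5,7) by blast
  ultimately have "B \<inter> C \<in> part_restr a C" by simp
  then obtain Z' where Z': "Z' \<in> a" "B \<inter> C = Z' \<inter> C" unfolding part_restr_def by blast
  have "x \<in> Z'" using Z' assms(5,7) by blast
  hence "Z' = Z" using ispart_disj[OF Orp_ispart[OF assms(1)] Z'(1) assms(4)] assms(6) by blast
  thus ?thesis using Z' by simp
qed

lemma twoch_C1: "twoch P le C1 C2 \<Longrightarrow> is_chain P le C1"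
  unfolding twoch_def by blast

lemma refines_trans: "refines a b \<Longrightarrow> refines b c \<Longrightarrow> refines a c"
  unfolding refines_def by (meson order_trans)

lemma anc_trans:
  assumes "b \<in> anc P le a"
  shows "anc P le b = {c \<in> anc P le a. refines b c}"
proof -
  have b: "refines a b" "\<forall>C. is_chain P le C \<longrightarrow> part_restr b C = part_restr a C"
    using assms unfolding anc_def by blast+
  show ?thesis
  proof
    show "anc P le b \<subseteq> {c \<in> anc P le a. refines b c}"
      using b refines_trans unfolding anc_def by fastforce
    show "{c \<in> anc P le a. refines b c} \<subseteq> anc P le b"
      using b unfolding anc_def by auto
  qed
qed

lemma refines_refl: "refines a a"
  unfolding refines_def by blast

lemma anc_self: "a \<in> Orp P le \<Longrightarrow> a \<in> anc P le a"
  unfolding anc_def using refines_refl by blast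

lemma anc_chain:
  assumes "a \<in> Orp P le" "is_chain P le P"
  shows "anc P le a = {a}"
proof
  show "{a} \<subseteq> anc P le a" using anc_self[OF assms(1)] by blast
  show "anc P le a \<subseteq> {a}"
  proof
    fix b assume b: "b \<in> anc P le a"
    have "part_restr b P = part_restr a P" using b assms(2) unfolding anc_def by blast
    moreover have "part_restr b P = b"
    proof -
      have ipb: "ispart P b" using anc_Orp[OF b] by (rule Orp_ispart)
      have "{B \<inter> P |B. B \<in> b} = b"
      proof -
        have "\<forall>B\<in>b. B \<inter> P = B" using ispart_sub[OF ipb] by blast
        thus ?thesis by force
      qed
      moreover have "{} \<notin> b" using ispart_ne[OF ipb] by blast
      ultimately show ?thesis unfolding part_restr_def by simp
    qed
    moreover have "part_restr a P = a"
    proof -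
      have ipa: "ispart P a" using assms(1) by (rule Orp_ispart)
      have "{B \<inter> P |B. B \<in> a} = a"
      proof -
        have "\<forall>B\<in>a. B \<inter> P = B" using ispart_sub[OF ipa] by blast
        thus ?thesis by force
      qed
      moreover have "{} \<notin> a" using ispart_ne[OF ipa] by blast
      ultimately show ?thesis unfolding part_restr_def by simp
    qed
    ultimately show "b \<in> {a}" by simp
  qed
qed

lemma twoch_chainP: "twoch P le C1 C2 \<Longrightarrow> C2 = {} \<Longrightarrow> is_chain P le P"
proof -
  assume "twoch P le C1 C2" "C2 = {}"
  hence "P = C1 \<union> C2" "is_chain P le C1" unfolding twoch_def by blast+
  hence "P = C1" using \<open>C2 = {}\<close> by simp
  show ?thesis using \<open>is_chain P le C1\<close> \<open>P = C1\<close> by metis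
qed


lemma anc_finite: "finite P \<Longrightarrow> finite (anc P le a)"
proof -
  assume fin: "finite P"
  have "anc P le a \<subseteq> Pow (Pow P)"
  proof
    fix b assume "b \<in> anc P le a"
    hence "ispart P b" using anc_Orp Orp_ispart by blast
    thus "b \<in> Pow (Pow P)" using ispart_sub by blast
  qed
  thus ?thesis using fin by (meson finite_Pow_iff finite_subset)
qed

locale H =
  fixes P le C1 C2 a m1 m2 X Y
  assumes tc: "twoch P le C1 C2" and aO: "a \<in> Orp P le"
    and m1: "m1 \<in> C1" "\<forall>z\<in>C1. le z m1" and m2: "m2 \<in> C2" "\<forall>z\<in>C2. le z m2"
    and X: "X \<in> a" "m1 \<in> X" "X \<subseteq> C1" and Y: "Y \<in> a" "m2 \<in> Y" "Y \<subseteq> C2"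
begin

lemma ipa: "ispart P a" using aO by (rule Orp_ispart)

lemma sym: "H P le C2 C1 a m2 m1 Y X"
  unfolding H_def using tc aO m1 m2 X Y twoch_sym by blast

lemma top_block:
  assumes b: "b \<in> anc P le a" and T: "T \<in> b" "upcl P le T" "m1 \<in> T" and Xb: "X \<notin> b"
  shows "T = X \<union> Y"
proof -
  have ipb: "ispart P b" using anc_Orp[OF b] by (rule Orp_ispart)
  have XT: "X \<subseteq> T" using anc_ref[OF b X(1) T(1) X(2) T(3)] .
  have T1: "T \<inter> C1 = X \<inter> C1" using anc_blk[OF aO b T(1) X(1) T(3) X(2) m1(1) twoch_C1[OF tc]] .
  have "T \<noteq> X" using T(1) Xb by blast
  then obtain z where z: "z \<in> T" "z \<notin> X" using XT by blast
  have TP: "T \<subseteq> P" using ispart_sub[OF ipb T(1)] .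
  have "z \<notin> C1" using z T1 by blast
  hence "z \<in> C2" using z TP twoch_P[OF tc] by blast
  have "m2 \<in> T" using up_meet[OF twoch_sym[OF tc] T(2) z(1) \<open>z \<in> C2\<close> m2] .
  have YT: "Y \<subseteq> T" using anc_ref[OF b Y(1) T(1) Y(2) \<open>m2 \<in> T\<close>] .
  have T2: "T \<inter> C2 = Y \<inter> C2"
    using anc_blk[OF aO b T(1) Y(1) \<open>m2 \<in> T\<close> Y(2) m2(1) twoch_C1[OF twoch_sym[OF tc]]] .
  have "T = (T \<inter> C1) \<union> (T \<inter> C2)" using TP twoch_P[OF tc] by blast
  also have "\<dots> = X \<union> Y" using T1 T2 X(3) Y(3) by blast
  finally show ?thesis .
qed

lemma XY_disj: "X \<inter> Y = {}"
  using X(3) Y(3) twoch_disj[OF tc] by blast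

lemma XY_ne: "X \<noteq> Y"
  using XY_disj X(2) by blast

lemma not_both_XY:
  assumes "b \<in> anc P le a" "X \<union> Y \<in> b" "X \<in> b"
  shows False
proof -
  have ipb: "ispart P b" using anc_Orp[OF assms(1)] by (rule Orp_ispart)
  have "X \<union> Y = X" using ispart_disj[OF ipb assms(2) assms(3), of m1] X(2) by blast
  thus False using Y(2) XY_disj by blast
qed

end

lemma H_not_both_Y:
  assumes "H P le C1 C2 a m1 m2 X Y" "b \<in> anc P le a" "X \<union> Y \<in> b" "Y \<in> b"
  shows False
  using H.not_both_XY[OF H.sym[OF assms(1)] assms(2)] assms(3,4) by (simp add: Un_commute)

lemma H_split_mem:
  assumes h: "H P le C1 C2 a m1 m2 X Y" and b: "b \<in> anc P le a"
  shows "X \<in> b \<or> (Y \<in> b \<and> X \<notin> b) \<or> X \<union> Y \<in> b"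
proof -
  interpret H P le C1 C2 a m1 m2 X Y by (rule h)
  show ?thesis
  proof (cases "X \<in> b \<or> Y \<in> b")
    case True thus ?thesis by blast
  next
    case False
    have fin: "finite P" using twoch_finite[OF tc] .
    have "P \<noteq> {}" using m1(1) twoch_P[OF tc] by blast
    then obtain T where T: "T \<in> b" "upcl P le T" using Orp_top[OF fin _ anc_Orp[OF b]] by blast
    have ipb: "ispart P b" using anc_Orp[OF b] by (rule Orp_ispart)
    obtain z where z: "z \<in> T" using ispart_ne[OF ipb T(1)] by blast
    have "z \<in> C1 \<or> z \<in> C2" using z ispart_sub[OF ipb T(1)] twoch_P[OF tc] by blast
    thus ?thesis
    proof
      assume "z \<in> C1"
      hence "m1 \<in> T" using up_meet[OF tc T(2) z _ m1] by blast
      hence "T = X \<union> Y" using top_block[OF b T] False by blast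
      thus ?thesis using T(1) by blast
    next
      assume "z \<in> C2"
      hence "m2 \<in> T" using up_meet[OF twoch_sym[OF tc] T(2) z _ m2] by blast
      hence "T = Y \<union> X" using H.top_block[OF sym b T] False by blast
      thus ?thesis using T(1) by (simp add: Un_commute)
    qed
  qed
qed

lemma H_split:
  assumes h: "H P le C1 C2 a m1 m2 X Y"
  shows "anc P le a = {b \<in> anc P le a. X \<in> b \<and> True}
     \<union> {b \<in> anc P le a. Y \<in> b \<and> X \<notin> b - {Y}}
     \<union> {b \<in> anc P le a. X \<union> Y \<in> b \<and> True}"
  using H_split_mem[OF h] H.XY_ne[OF h] by blast

lemma H_split_disj:
  assumes h: "H P le C1 C2 a m1 m2 X Y"
  shows "{b \<in> anc P le a. X \<in> b \<and> True} \<inter> {b \<in> anc P le a. Y \<in> b \<and> X \<notin> b - {Y}} = {}"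
    "({b \<in> anc P le a. X \<in> b \<and> True} \<union> {b \<in> anc P le a. Y \<in> b \<and> X \<notin> b - {Y}})
      \<inter> {b \<in> anc P le a. X \<union> Y \<in> b \<and> True} = {}"
  using H.XY_ne[OF h] H.not_both_XY[OF h] H_not_both_Y[OF h] by blast+


lemma card_remove_lt: "finite P \<Longrightarrow> X \<subseteq> P \<Longrightarrow> X \<noteq> {} \<Longrightarrow> card (P - X) < card P"
proof -
  assume "finite P" "X \<subseteq> P" "X \<noteq> {}"
  hence "P - X \<subset> P" by blast
  thus ?thesis using \<open>finite P\<close> by (rule psubset_card_mono[rotated])
qed

lemma part1_main:
  assumes tc: "twoch P le C1 C2" and aO: "a \<in> Orp P le"
    and m1: "m1 \<in> C1" "\<forall>z\<in>C1. le z m1" and X: "X \<in> a" "m1 \<in> X"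
    and cs: "C2 = {} \<or> upcl P le X"
    and IH: "\<And>P' C1' C2' a'. card P' < card P \<Longrightarrow> twoch P' le C1' C2' \<Longrightarrow> a' \<in> Orp P' le
               \<Longrightarrow> opfact P' le a' = card (anc P' le a')"
  shows "opfact P le a = card (anc P le a)"
proof -
  have fin: "finite P" using twoch_finite[OF tc] .
  have ipa: "ispart P a" using aO by (rule Orp_ispart)
  have Pne: "P \<noteq> {}" using m1(1) twoch_P[OF tc] by blast
  have XP: "X \<subseteq> P" using ispart_sub[OF ipa X(1)] .
  have Xne: "X \<noteq> {}" using X(2) by blast
  have one1: "\<forall>C. is_chain P le C \<longrightarrow> (\<forall>Z\<in>{X}. \<forall>Z'\<in>{X}. Z \<inter> C \<noteq> {} \<longrightarrow> Z' \<inter> C \<noteq> {} \<longrightarrow> Z = Z')"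
    by blast
  have Xup: "upcl P le X"
  proof (cases "C2 = {}")
    case True
    hence "X \<subseteq> C1" using XP twoch_P[OF tc] by blast
    thus ?thesis using pure_up[OF twoch_sym[OF tc] aO X(1) _ X(2) m1(2)] by blast
  next
    case False thus ?thesis using cs by blast
  qed
  have IHX: "opfact (P - X) le (a - {X}) = card (anc (P - X) le (a - {X}))"
  proof (rule IH)
    show "card (P - X) < card P" using card_remove_lt[OF fin XP Xne] .
    show "twoch (P - X) le (C1 - X) (C2 - X)" using twoch_remove[OF tc] .
    show "a - {X} \<in> Orp (P - X) le" using Orp_remove[OF aO, of "{X}"] X(1) by simp
  qed
  have RemX: "card {b \<in> anc P le a. X \<in> b \<and> Q (b - {X})} = card {b' \<in> anc (P - X) le (a - {X}). Q b'}" for Q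
    by (rule Rem_card[OF fin aO _ _ _ Xup one1]) (use X(1) in auto)
  have Uup: "T = X \<or> (C2 \<noteq> {} \<and> (\<exists>m2\<in>C2. (\<forall>z\<in>C2. le z m2) \<and> m2 \<in> T))" if T: "T \<in> a" "upcl P le T" for T
  proof -
    obtain z where z: "z \<in> T" using ispart_ne[OF ipa T(1)] by blast
    have "z \<in> C1 \<or> z \<in> C2" using z ispart_sub[OF ipa T(1)] twoch_P[OF tc] by blast
    thus ?thesis
    proof
      assume "z \<in> C1"
      hence "m1 \<in> T" using up_meet[OF tc T(2) z _ m1] by blast
      thus ?thesis using ispart_disj[OF ipa T(1) X(1), of m1] X(2) by blast
    next
      assume zc: "z \<in> C2"
      hence "C2 \<noteq> {}" by blast
      then obtain m2 where m2: "m2 \<in> C2" "\<forall>z\<in>C2. le z m2" using twoch_max1[OF twoch_sym[OF tc]] by blast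
      have "m2 \<in> T" using up_meet[OF twoch_sym[OF tc] T(2) z zc m2] .
      thus ?thesis using m2 \<open>C2 \<noteq> {}\<close> by blast
    qed
  qed
  show ?thesis
  proof (cases "C2 = {}")
    case True
    have U: "{T \<in> a. upcl P le T} = {X}" using Uup True X(1) Xup by blast
    have "anc P le a = {a}" using anc_chain[OF aO twoch_chainP[OF tc True]] .
    hence "{b \<in> anc P le a. X \<in> b \<and> True} = anc P le a" using X(1) by blast
    hence "card (anc P le a) = card (anc (P - X) le (a - {X}))" using RemX[of "\<lambda>_. True"] by simp
    moreover have "opfact P le a = opfact (P - X) le (a - {X})" using OF[OF fin Pne aO] U by simp
    ultimately show ?thesis using IHX by simp
  next
    case C2ne: False
    then obtain m2 where m2: "m2 \<in> C2" "\<forall>z\<in>C2. le z m2" using twoch_max1[OF twoch_sym[OF tc]] by blast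
    have m2P: "m2 \<in> P" using m2(1) twoch_P[OF tc] by blast
    obtain Y where Y: "Y \<in> a" "m2 \<in> Y" using ispart_cover[OF ipa m2P] by blast
    have Tm2: "T = Y" if "T \<in> a" "m2 \<in> T" for T
      using ispart_disj[OF ipa that(1) Y(1), of m2] that Y by blast
    have maxu: "m = m2" if "m \<in> C2" "\<forall>z\<in>C2. le z m" for m
    proof -
      have "le m m2" "le m2 m" using that m2 by blast+
      moreover have "m \<in> P" using that twoch_P[OF tc] by blast
      ultimately show ?thesis using poset_antisym[of P le m m2] tc m2P unfolding twoch_def by blast
    qed
    show ?thesis
    proof (cases "X \<noteq> Y \<and> upcl P le Y")
      case False
      have U: "{T \<in> a. upcl P le T} = {X}"
      proof
        show "{T \<in> a. upcl P le T} \<subseteq> {X}"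
        proof
          fix T assume "T \<in> {T \<in> a. upcl P le T}"
          hence T: "T \<in> a" "upcl P le T" by blast+
          from Uup[OF T] show "T \<in> {X}"
          proof
            assume "T = X" thus ?thesis by simp
          next
            assume "C2 \<noteq> {} \<and> (\<exists>m2\<in>C2. (\<forall>z\<in>C2. le z m2) \<and> m2 \<in> T)"
            then obtain m where "m \<in> C2" "\<forall>z\<in>C2. le z m" "m \<in> T" by blast
            hence "m2 \<in> T" using maxu by blast
            hence "T = Y" using Tm2 T(1) by blast
            thus ?thesis using False T(2) by blast
          qed
        qed
        show "{X} \<subseteq> {T \<in> a. upcl P le T}" using X(1) Xup by blast
      qed
      have allX: "X \<in> b" if b: "b \<in> anc P le a" for b
      proof (rule ccontr)
        assume Xb: "X \<notin> b"
        have ipb: "ispart P b" using anc_Orp[OF b] by (rule Orp_ispart)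
        show False
        proof (cases "X = Y")
          case True
          obtain B where B: "B \<in> b" "m1 \<in> B" using ispart_cover[OF ipb, of m1] m1(1) twoch_P[OF tc] by blast
          have XB: "X \<subseteq> B" using anc_ref[OF b X(1) B(1) X(2) B(2)] .
          have "m2 \<in> B" using XB Y(2) True by blast
          have B1: "B \<inter> C1 = X \<inter> C1" using anc_blk[OF aO b B(1) X(1) B(2) X(2) m1(1) twoch_C1[OF tc]] .
          have B2: "B \<inter> C2 = X \<inter> C2"
            using anc_blk[OF aO b B(1) X(1) \<open>m2 \<in> B\<close> _ m2(1) twoch_C1[OF twoch_sym[OF tc]]] Y(2) True by blast
          have "B \<subseteq> P" using ispart_sub[OF ipb B(1)] .
          hence "B \<subseteq> X" using B1 B2 twoch_P[OF tc] by blast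
          hence "B = X" using XB by blast
          thus False using Xb B(1) by blast
        next
          case XY: False
          hence nY: "\<not> upcl P le Y" using False by blast
          obtain T where T: "T \<in> b" "upcl P le T" using Orp_top[OF fin Pne anc_Orp[OF b]] by blast
          obtain z where z: "z \<in> T" using ispart_ne[OF ipb T(1)] by blast
          have TP: "T \<subseteq> P" using ispart_sub[OF ipb T(1)] .
          have PC: "P = C1 \<union> C2" using twoch_P[OF tc] .
          have m2T: "m2 \<in> T"
          proof (cases "m1 \<in> T")
            case True
            have XT: "X \<subseteq> T" using anc_ref[OF b X(1) T(1) X(2) True] .
            have T1: "T \<inter> C1 = X \<inter> C1" using anc_blk[OF aO b T(1) X(1) True X(2) m1(1) twoch_C1[OF tc]] .
            have "T \<noteq> X" using T(1) Xb by blast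
            then obtain w where w: "w \<in> T" "w \<notin> X" using XT by blast
            have "w \<notin> C1" using w T1 by blast
            moreover have "w \<in> P" using w TP by blast
            ultimately have "w \<in> C2" using PC by simp
            show ?thesis using up_meet[OF twoch_sym[OF tc] T(2) w(1) \<open>w \<in> C2\<close> m2] .
          next
            case False
            have TC1: "T \<inter> C1 = {}" using up_meet[OF tc T(2) _ _ m1] False by blast
            have "z \<in> P" using z TP by blast
            hence "z \<in> C2" using PC TC1 z by blast
            show ?thesis using up_meet[OF twoch_sym[OF tc] T(2) z \<open>z \<in> C2\<close> m2] .
          qed
          have YT: "Y \<subseteq> T" using anc_ref[OF b Y(1) T(1) Y(2) m2T] .
          have c1: "Y \<inter> C1 = {}"
          proof (cases "m1 \<in> T")
            case True
            have T1: "T \<inter> C1 = X \<inter> C1" using anc_blk[OF aO b T(1) X(1) True X(2) m1(1) twoch_C1[OF tc]] .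
            have "X \<inter> Y = {}"
            proof (rule ccontr)
              assume "X \<inter> Y \<noteq> {}"
              then obtain u where "u \<in> X" "u \<in> Y" by blast
              thus False using ispart_disj[OF ipa X(1) Y(1)] XY by blast
            qed
            thus ?thesis using YT T1 by blast
          next
            case False
            have TC1: "T \<inter> C1 = {}" using up_meet[OF tc T(2) _ _ m1] False by blast
            thus ?thesis using YT by blast
          qed
          have "Y \<subseteq> C2" using c1 ispart_sub[OF ipa Y(1)] twoch_P[OF tc] by blast
          hence "upcl P le Y" using pure_up[OF tc aO Y(1) _ Y(2) m2(2)] by blast
          thus False using nY by blast
        qed
      qed
      have "{b \<in> anc P le a. X \<in> b \<and> True} = anc P le a" using allX by blast
      hence "card (anc P le a) = card (anc (P - X) le (a - {X}))" using RemX[of "\<lambda>_. True"] by simp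
      moreover have "opfact P le a = opfact (P - X) le (a - {X})" using OF[OF fin Pne aO] U by simp
      ultimately show ?thesis using IHX by simp
    next
      case True
      hence XY: "X \<noteq> Y" and Yup: "upcl P le Y" by blast+
      have X1: "X \<subseteq> C1"
      proof
        fix z assume "z \<in> X"
        show "z \<in> C1"
        proof (rule ccontr)
          assume "z \<notin> C1"
          hence "z \<in> C2" using \<open>z \<in> X\<close> XP twoch_P[OF tc] by blast
          hence "m2 \<in> X" using up_meet[OF twoch_sym[OF tc] Xup \<open>z \<in> X\<close> _ m2] by blast
          thus False using Tm2[OF X(1)] XY by blast
        qed
      qed
      have Y2: "Y \<subseteq> C2"
      proof
        fix z assume "z \<in> Y"
        show "z \<in> C2"
        proof (rule ccontr)
          assume "z \<notin> C2"
          hence "z \<in> C1" using \<open>z \<in> Y\<close> ispart_sub[OF ipa Y(1)] twoch_P[OF tc] by blast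
          hence "m1 \<in> Y" using up_meet[OF tc Yup \<open>z \<in> Y\<close> _ m1] by blast
          thus False using ispart_disj[OF ipa X(1) Y(1), of m1] X(2) XY by blast
        qed
      qed
      have h: "H P le C1 C2 a m1 m2 X Y"
        unfolding H_def using tc aO m1 m2 X Y X1 Y2 by blast
      have YP: "Y \<subseteq> P" using ispart_sub[OF ipa Y(1)] .
      have Yne: "Y \<noteq> {}" using Y(2) by blast
      have XYd: "X \<inter> Y = {}" using H.XY_disj[OF h] .
      have U: "{T \<in> a. upcl P le T} = {X, Y}"
      proof
        show "{T \<in> a. upcl P le T} \<subseteq> {X, Y}"
        proof
          fix T assume "T \<in> {T \<in> a. upcl P le T}"
          hence T: "T \<in> a" "upcl P le T" by blast+
          from Uup[OF T] show "T \<in> {X, Y}"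
          proof
            assume "T = X" thus ?thesis by simp
          next
            assume "C2 \<noteq> {} \<and> (\<exists>m2\<in>C2. (\<forall>z\<in>C2. le z m2) \<and> m2 \<in> T)"
            then obtain m where "m \<in> C2" "\<forall>z\<in>C2. le z m" "m \<in> T" by blast
            hence "m2 \<in> T" using maxu by blast
            thus ?thesis using Tm2 T(1) by blast
          qed
        qed
        show "{X, Y} \<subseteq> {T \<in> a. upcl P le T}" using X(1) Y(1) Xup Yup by blast
      qed
      have ofa: "opfact P le a = opfact (P - X) le (a - {X}) + opfact (P - Y) le (a - {Y})"
        using OF[OF fin Pne aO] U XY by simp
      have IHY: "opfact (P - Y) le (a - {Y}) = card (anc (P - Y) le (a - {Y}))"
      proof (rule IH)
        show "card (P - Y) < card P" using card_remove_lt[OF fin YP Yne] .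
        show "twoch (P - Y) le (C1 - Y) (C2 - Y)" using twoch_remove[OF tc] .
        show "a - {Y} \<in> Orp (P - Y) le" using Orp_remove[OF aO, of "{Y}"] Y(1) by simp
      qed
      have one_1: "\<forall>C. is_chain P le C \<longrightarrow> (\<forall>Z\<in>{Y}. \<forall>Z'\<in>{Y}. Z \<inter> C \<noteq> {} \<longrightarrow> Z' \<inter> C \<noteq> {} \<longrightarrow> Z = Z')"
        by blast
      have S2: "card {b \<in> anc P le a. Y \<in> b \<and> X \<notin> b - {Y}} = card {b' \<in> anc (P - Y) le (a - {Y}). X \<notin> b'}"
        by (rule Rem_card[OF fin aO _ _ _ Yup one_1]) (use Y(1) in auto)
      have aYO: "a - {Y} \<in> Orp (P - Y) le" using Orp_remove[OF aO, of "{Y}"] Y(1) by simp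
      have XupY: "upcl (P - Y) le X" using Xup unfolding upcl_def by blast
      have finY: "finite (P - Y)" using fin by simp
      have one2: "\<forall>C. is_chain (P - Y) le C \<longrightarrow> (\<forall>Z\<in>{X}. \<forall>Z'\<in>{X}. Z \<inter> C \<noteq> {} \<longrightarrow> Z' \<inter> C \<noteq> {} \<longrightarrow> Z = Z')"
        by blast
      have S2b: "card {b' \<in> anc (P - Y) le (a - {Y}). X \<in> b' \<and> True} = card (anc (P - Y - X) le (a - {Y} - {X}))"
        using Rem_card[OF finY aYO _ _ _ XupY one2, where Q="\<lambda>_. True"] X(1) XY by simp
      have finA: "finite (anc (P - Y) le (a - {Y}))" using anc_finite[OF finY] .
      have S2c: "card {b' \<in> anc (P - Y) le (a - {Y}). X \<notin> b'}
         = card (anc (P - Y) le (a - {Y})) - card {b' \<in> anc (P - Y) le (a - {Y}). X \<in> b' \<and> True}"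
      proof -
        have "anc (P - Y) le (a - {Y}) = {b' \<in> anc (P - Y) le (a - {Y}). X \<notin> b'} \<union> {b' \<in> anc (P - Y) le (a - {Y}). X \<in> b' \<and> True}"
          by blast
        hence "card (anc (P - Y) le (a - {Y})) = card {b' \<in> anc (P - Y) le (a - {Y}). X \<notin> b'} + card {b' \<in> anc (P - Y) le (a - {Y}). X \<in> b' \<and> True}"
          using finA by (metis (no_types, lifting) card_Un_disjoint disjoint_iff finite_Un mem_Collect_eq)
        thus ?thesis by simp
      qed
      have XYup: "upcl P le (X \<union> Y)" using Xup Yup unfolding upcl_def by blast
      have oneXY: "\<forall>C. is_chain P le C \<longrightarrow> (\<forall>Z\<in>{X, Y}. \<forall>Z'\<in>{X, Y}. Z \<inter> C \<noteq> {} \<longrightarrow> Z' \<inter> C \<noteq> {} \<longrightarrow> Z = Z')"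
      proof (intro allI impI ballI)
        fix C Z Z' assume C: "is_chain P le C" and ZZ: "Z \<in> {X, Y}" "Z' \<in> {X, Y}" "Z \<inter> C \<noteq> {}" "Z' \<inter> C \<noteq> {}"
        show "Z = Z'"
        proof (rule ccontr)
          assume "Z \<noteq> Z'"
          hence "X \<inter> C \<noteq> {}" "Y \<inter> C \<noteq> {}" using ZZ by blast+
          moreover have "C \<subseteq> C1 \<or> C \<subseteq> C2" using chains_in[OF tc C] .
          ultimately show False using X1 Y2 twoch_disj[OF tc] by blast
        qed
      qed
      have S3: "card {b \<in> anc P le a. X \<union> Y \<in> b \<and> True} = card (anc (P - (X \<union> Y)) le (a - {X, Y}))"
        using Rem_card[OF fin aO _ _ _ XYup oneXY, where Q="\<lambda>_. True"] X(1) Y(1) by simp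
      have eqs: "P - Y - X = P - (X \<union> Y)" "a - {Y} - {X} = a - {X, Y}" by blast+
      have financ: "finite (anc P le a)" using anc_finite[OF fin] .
      have "card (anc P le a) = card {b \<in> anc P le a. X \<in> b \<and> True}
          + card {b \<in> anc P le a. Y \<in> b \<and> X \<notin> b - {Y}} + card {b \<in> anc P le a. X \<union> Y \<in> b \<and> True}"
      proof -
        let ?A = "{b \<in> anc P le a. X \<in> b \<and> True}"
        let ?B = "{b \<in> anc P le a. Y \<in> b \<and> X \<notin> b - {Y}}"
        let ?C = "{b \<in> anc P le a. X \<union> Y \<in> b \<and> True}"
        have fA: "finite ?A" "finite ?B" "finite ?C" using financ by simp_all
        have "card (anc P le a) = card ((?A \<union> ?B) \<union> ?C)" using H_split[OF h] by simp
        also have "\<dots> = card (?A \<union> ?B) + card ?C" using H_split_disj(2)[OF h] fA by (simp add: card_Un_disjoint)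
        also have "card (?A \<union> ?B) = card ?A + card ?B" using H_split_disj(1)[OF h] fA by (simp add: card_Un_disjoint)
        finally show ?thesis .
      qed
      also have "\<dots> = card (anc (P - X) le (a - {X})) + (card (anc (P - Y) le (a - {Y})) - card (anc (P - (X \<union> Y)) le (a - {X, Y})))
          + card (anc (P - (X \<union> Y)) le (a - {X, Y}))"
        using RemX[of "\<lambda>_. True"] S2 S2c S2b S3 eqs by simp
      also have "\<dots> = card (anc (P - X) le (a - {X})) + card (anc (P - Y) le (a - {Y}))"
      proof -
        have "card {b' \<in> anc (P - Y) le (a - {Y}). X \<in> b' \<and> True} \<le> card (anc (P - Y) le (a - {Y}))"
          using finA by (intro card_mono) auto
        thus ?thesis using S2b eqs by simp
      qed
      finally show ?thesis using ofa IHX IHY by simp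
    qed
  qed
qed


lemma Orp_empty: "a \<in> Orp {} le \<Longrightarrow> a = {}"
  using ispart_sub[OF Orp_ispart] ispart_ne[OF Orp_ispart] by blast

lemma part1_base:
  assumes "a \<in> Orp {} le"
  shows "opfact {} le a = card (anc {} le a)"
proof -
  have a: "a = {}" using Orp_empty[OF assms] .
  have "{f \<in> {} \<rightarrow>\<^sub>E {1..card a}. order_pres {} le f \<and> kern {} f = a} = {\<lambda>x. undefined}"
    unfolding a by (auto simp: order_pres_def kern_def)
  hence "opfact {} le a = 1" unfolding opfact_def by simp
  moreover have "anc {} le a = {a}" by (rule anc_chain[OF assms]) (simp add: is_chain_def)
  ultimately show ?thesis by simp
qed

theorem part1:
  assumes "twoch P le C1 C2" "a \<in> Orp P le"
  shows "opfact P le a = card (anc P le a)"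
  using assms
proof (induction "card P" arbitrary: P C1 C2 a rule: less_induct)
  case less
  note tc = less.prems(1) and aO = less.prems(2)
  have IH: "\<And>P' C1' C2' a'. card P' < card P \<Longrightarrow> twoch P' le C1' C2' \<Longrightarrow> a' \<in> Orp P' le
               \<Longrightarrow> opfact P' le a' = card (anc P' le a')" using less.hyps by blast
  have fin: "finite P" using twoch_finite[OF tc] .
  have ipa: "ispart P a" using aO by (rule Orp_ispart)
  have PC: "P = C1 \<union> C2" using twoch_P[OF tc] .
  show ?case
  proof (cases "P = {}")
    case True thus ?thesis using part1_base aO by blast
  next
    case Pne: False
    have main1: ?thesis if ne: "C1 \<noteq> {}" and cs: "C2 = {} \<or> (\<forall>m1 X. m1 \<in> C1 \<longrightarrow> (\<forall>z\<in>C1. le z m1) \<longrightarrow> X \<in> a \<longrightarrow> m1 \<in> X \<longrightarrow> upcl P le X)"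
    proof -
      obtain m1 where m1: "m1 \<in> C1" "\<forall>z\<in>C1. le z m1" using twoch_max1[OF tc ne] by blast
      obtain X where X: "X \<in> a" "m1 \<in> X" using ispart_cover[OF ipa, of m1] m1(1) PC by blast
      show ?thesis by (rule part1_main[OF tc aO m1 X _ IH]) (use cs m1 X in blast)+
    qed
    have main2: ?thesis if ne: "C2 \<noteq> {}" and cs: "C1 = {} \<or> (\<forall>m1 X. m1 \<in> C2 \<longrightarrow> (\<forall>z\<in>C2. le z m1) \<longrightarrow> X \<in> a \<longrightarrow> m1 \<in> X \<longrightarrow> upcl P le X)"
    proof -
      obtain m1 where m1: "m1 \<in> C2" "\<forall>z\<in>C2. le z m1" using twoch_max1[OF twoch_sym[OF tc] ne] by blast
      obtain X where X: "X \<in> a" "m1 \<in> X" using ispart_cover[OF ipa, of m1] m1(1) PC by blast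
      show ?thesis by (rule part1_main[OF twoch_sym[OF tc] aO m1 X _ IH]) (use cs m1 X in blast)+
    qed
    show ?thesis
    proof (cases "C1 = {}")
      case True thus ?thesis using main2 Pne PC by blast
    next
      case C1ne: False
      show ?thesis
      proof (cases "C2 = {}")
        case True thus ?thesis using main1 C1ne by blast
      next
        case C2ne: False
        obtain T where T: "T \<in> a" "upcl P le T" using Orp_top[OF fin Pne aO] by blast
        obtain z where z: "z \<in> T" using ispart_ne[OF ipa T(1)] by blast
        have "z \<in> P" using z ispart_sub[OF ipa T(1)] by blast
        hence "z \<in> C1 \<or> z \<in> C2" using PC by simp
        thus ?thesis
        proof
          assume zc: "z \<in> C1"
          have "\<forall>m1 X. m1 \<in> C1 \<longrightarrow> (\<forall>z\<in>C1. le z m1) \<longrightarrow> X \<in> a \<longrightarrow> m1 \<in> X \<longrightarrow> upcl P le X"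
          proof (intro allI impI)
            fix m1 X assume h: "m1 \<in> C1" "\<forall>z\<in>C1. le z m1" "X \<in> a" "m1 \<in> X"
            have "m1 \<in> T" using up_meet[OF tc T(2) z zc h(1,2)] .
            hence "T = X" using ispart_disj[OF ipa T(1) h(3)] h(4) by blast
            thus "upcl P le X" using T(2) by simp
          qed
          thus ?thesis using main1 C1ne by blast
        next
          assume zc: "z \<in> C2"
          have "\<forall>m1 X. m1 \<in> C2 \<longrightarrow> (\<forall>z\<in>C2. le z m1) \<longrightarrow> X \<in> a \<longrightarrow> m1 \<in> X \<longrightarrow> upcl P le X"
          proof (intro allI impI)
            fix m1 X assume h: "m1 \<in> C2" "\<forall>z\<in>C2. le z m1" "X \<in> a" "m1 \<in> X"
            have "m1 \<in> T" using up_meet[OF twoch_sym[OF tc] T(2) z zc h(1,2)] .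
            hence "T = X" using ispart_disj[OF ipa T(1) h(3)] h(4) by blast
            thus "upcl P le X" using T(2) by simp
          qed
          thus ?thesis using main2 C2ne by blast
        qed
      qed
    qed
  qed
qed


fun MM :: "nat \<Rightarrow> nat \<Rightarrow> nat \<Rightarrow> real" where
  "MM 0 q t = (-1)^q / real (q + t)"
| "MM (Suc p) 0 t = (-1)^(Suc p) / real (Suc p + t)"
| "MM (Suc p) (Suc q) t = - (MM p (Suc q) (t+1) + MM (Suc p) q (t+1) + MM p q (t+1))"

lemma MM_q0: "MM p 0 t = (-1)^p / real (p + t)"
  by (cases p) simp_all

definition CF :: "nat \<Rightarrow> nat \<Rightarrow> nat \<Rightarrow> real" where
  "CF p q s = (-1)^(p+q) * fact (s+p) * fact (s+q) / (fact s * fact (Suc (s+p+q)))"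

lemma CF_base: "CF 0 q s = (-1)^q / real (q + Suc s)"
proof -
  define F where "F = (fact s :: real)"
  define Q where "Q = (fact (s+q) :: real)"
  have nz: "F \<noteq> 0" "Q \<noteq> 0" "real (q + Suc s) \<noteq> 0" unfolding F_def Q_def by simp_all
  have Q1: "fact (Suc (s+0+q)) = real (q + Suc s) * Q" unfolding Q_def by (simp add: algebra_simps)
  have "CF 0 q s = (-1)^q * F * Q / (F * (real (q + Suc s) * Q))"
    unfolding CF_def F_def Q_def using Q1 unfolding Q_def by simp
  also have "\<dots> = ((F * Q) * (-1)^q) / ((F * Q) * real (q + Suc s))" by (simp add: ac_simps)
  also have "\<dots> = (-1)^q / real (q + Suc s)" using nz by simp
  finally show ?thesis .
qed

lemma alg:
  fixes s p q A B F G \<sigma> :: real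
  assumes "s \<ge> 0" "p \<ge> 0" "q \<ge> 0" "A \<noteq> 0" "B \<noteq> 0" "F \<noteq> 0" "G \<noteq> 0"
  shows "\<sigma>*((s+p+1)*A)*((s+q+1)*B) / (F*((s+p+q+3)*(s+p+q+2)*(s+p+q+1)*G)) =
    - ( (-\<sigma>)*((s+p+1)*A)*((s+q+2)*(s+q+1)*B)/(((s+1)*F)*((s+p+q+3)*(s+p+q+2)*(s+p+q+1)*G))
      + (-\<sigma>)*((s+p+2)*(s+p+1)*A)*((s+q+1)*B)/(((s+1)*F)*((s+p+q+3)*(s+p+q+2)*(s+p+q+1)*G))
      + \<sigma>*((s+p+1)*A)*((s+q+1)*B)/(((s+1)*F)*((s+p+q+2)*(s+p+q+1)*G)))"
proof -
  have nz: "s+1 \<noteq> 0" "s+p+q+1 \<noteq> 0" "s+p+q+2 \<noteq> 0" "s+p+q+3 \<noteq> 0" "s+p+1 \<noteq> 0" "s+q+1 \<noteq> 0"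
    using assms by linarith+
  define N where "N = \<sigma>*(s+p+1)*A*(s+q+1)*B"
  define D where "D = (s+1)*F*(s+p+q+3)*(s+p+q+2)*(s+p+q+1)*G"
  have D: "D \<noteq> 0" unfolding D_def using nz assms by (simp only: mult_eq_0_iff de_Morgan_disj) blast
  have nzall: "A \<noteq> 0" "B \<noteq> 0" "F \<noteq> 0" "G \<noteq> 0" using assms by simp_all
  have e1: "\<sigma>*((s+p+1)*A)*((s+q+1)*B) / (F*((s+p+q+3)*(s+p+q+2)*(s+p+q+1)*G)) = N*(s+1)/D"
  proof (rule iffD2[OF frac_eq_eq])
    show "F*((s+p+q+3)*(s+p+q+2)*(s+p+q+1)*G) \<noteq> 0" using nz nzall by (simp only: mult_eq_0_iff de_Morgan_disj) blast
    show "D \<noteq> 0" by (rule D)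
    show "\<sigma>*((s+p+1)*A)*((s+q+1)*B) * D = N*(s+1) * (F*((s+p+q+3)*(s+p+q+2)*(s+p+q+1)*G))"
      unfolding N_def D_def by (simp only: ac_simps)
  qed
  have e2: "(-\<sigma>)*((s+p+1)*A)*((s+q+2)*(s+q+1)*B)/(((s+1)*F)*((s+p+q+3)*(s+p+q+2)*(s+p+q+1)*G)) = N*(-(s+q+2))/D"
  proof (rule iffD2[OF frac_eq_eq])
    show "((s+1)*F)*((s+p+q+3)*(s+p+q+2)*(s+p+q+1)*G) \<noteq> 0" using nz nzall by (simp only: mult_eq_0_iff de_Morgan_disj) blast
    show "D \<noteq> 0" by (rule D)
    show "(-\<sigma>)*((s+p+1)*A)*((s+q+2)*(s+q+1)*B) * D = N*(-(s+q+2)) * (((s+1)*F)*((s+p+q+3)*(s+p+q+2)*(s+p+q+1)*G))"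
      unfolding N_def D_def by (simp only: ac_simps mult_minus_left mult_minus_right)
  qed
  have e3: "(-\<sigma>)*((s+p+2)*(s+p+1)*A)*((s+q+1)*B)/(((s+1)*F)*((s+p+q+3)*(s+p+q+2)*(s+p+q+1)*G)) = N*(-(s+p+2))/D"
  proof (rule iffD2[OF frac_eq_eq])
    show "((s+1)*F)*((s+p+q+3)*(s+p+q+2)*(s+p+q+1)*G) \<noteq> 0" using nz nzall by (simp only: mult_eq_0_iff de_Morgan_disj) blast
    show "D \<noteq> 0" by (rule D)
    show "(-\<sigma>)*((s+p+2)*(s+p+1)*A)*((s+q+1)*B) * D = N*(-(s+p+2)) * (((s+1)*F)*((s+p+q+3)*(s+p+q+2)*(s+p+q+1)*G))"
      unfolding N_def D_def by (simp only: ac_simps mult_minus_left mult_minus_right)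
  qed
  have e4: "\<sigma>*((s+p+1)*A)*((s+q+1)*B)/(((s+1)*F)*((s+p+q+2)*(s+p+q+1)*G)) = N*(s+p+q+3)/D"
  proof (rule iffD2[OF frac_eq_eq])
    show "((s+1)*F)*((s+p+q+2)*(s+p+q+1)*G) \<noteq> 0" using nz nzall by (simp only: mult_eq_0_iff de_Morgan_disj) blast
    show "D \<noteq> 0" by (rule D)
    show "\<sigma>*((s+p+1)*A)*((s+q+1)*B) * D = N*(s+p+q+3) * (((s+1)*F)*((s+p+q+2)*(s+p+q+1)*G))"
      unfolding N_def D_def by (simp only: ac_simps)
  qed
  have "- (N*(-(s+q+2))/D + N*(-(s+p+2))/D + N*(s+p+q+3)/D) = - (N*(-(s+q+2)) + N*(-(s+p+2)) + N*(s+p+q+3))/D"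
    by (simp only: minus_divide_left[symmetric] add_divide_distrib)
  also have "- (N*(-(s+q+2)) + N*(-(s+p+2)) + N*(s+p+q+3)) = N*(s+1)" by (simp add: algebra_simps)
  finally show ?thesis unfolding e1 e2 e3 e4 by simp
qed

lemma CF_rec: "CF (Suc p) (Suc q) s = - (CF p (Suc q) (Suc s) + CF (Suc p) q (Suc s) + CF p q (Suc s))"
proof -
  define A where "A = (fact (s+p) :: real)"
  define B where "B = (fact (s+q) :: real)"
  define F where "F = (fact s :: real)"
  define G where "G = (fact (s+p+q) :: real)"
  define \<sigma> where "\<sigma> = ((-1::real)^(p+q))"
  let ?s = "real s" let ?p = "real p" let ?q = "real q"
  have T1: "fact (s + Suc p) = (?s+?p+1)*A" unfolding A_def by (simp add: algebra_simps)
  have T2: "fact (s + Suc q) = (?s+?q+1)*B" unfolding B_def by (simp add: algebra_simps)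
  have T3: "fact (Suc (s + Suc p + Suc q)) = (?s+?p+?q+3)*(?s+?p+?q+2)*(?s+?p+?q+1)*G"
    unfolding G_def by (simp add: algebra_simps)
  have T4: "fact (Suc s + p) = (?s+?p+1)*A" unfolding A_def by (simp add: algebra_simps)
  have T5: "fact (Suc s + Suc q) = (?s+?q+2)*(?s+?q+1)*B" unfolding B_def by (simp add: algebra_simps)
  have T6: "fact (Suc s) = (?s+1)*F" unfolding F_def by (simp add: algebra_simps)
  have T7: "fact (Suc (Suc s + p + Suc q)) = (?s+?p+?q+3)*(?s+?p+?q+2)*(?s+?p+?q+1)*G"
    unfolding G_def by (simp add: algebra_simps)
  have T8: "fact (Suc s + Suc p) = (?s+?p+2)*(?s+?p+1)*A" unfolding A_def by (simp add: algebra_simps)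
  have T9: "fact (Suc s + q) = (?s+?q+1)*B" unfolding B_def by (simp add: algebra_simps)
  have T10: "fact (Suc (Suc s + Suc p + q)) = (?s+?p+?q+3)*(?s+?p+?q+2)*(?s+?p+?q+1)*G"
    unfolding G_def by (simp add: algebra_simps)
  have T11: "fact (Suc (Suc s + p + q)) = (?s+?p+?q+2)*(?s+?p+?q+1)*G"
    unfolding G_def by (simp add: algebra_simps)
  have S1: "(-1::real)^(Suc p + Suc q) = \<sigma>" unfolding \<sigma>_def by simp
  have S2: "(-1::real)^(p + Suc q) = -\<sigma>" unfolding \<sigma>_def by simp
  have S3: "(-1::real)^(Suc p + q) = -\<sigma>" unfolding \<sigma>_def by simp
  have e1: "CF (Suc p) (Suc q) s = \<sigma>*((?s+?p+1)*A)*((?s+?q+1)*B) / (F*((?s+?p+?q+3)*(?s+?p+?q+2)*(?s+?p+?q+1)*G))"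
    unfolding CF_def by (simp only: T1 T2 T3 S1 F_def)
  have e2: "CF p (Suc q) (Suc s) = (-\<sigma>)*((?s+?p+1)*A)*((?s+?q+2)*(?s+?q+1)*B)/(((?s+1)*F)*((?s+?p+?q+3)*(?s+?p+?q+2)*(?s+?p+?q+1)*G))"
    unfolding CF_def by (simp only: T4 T5 T6 T7 S2)
  have e3: "CF (Suc p) q (Suc s) = (-\<sigma>)*((?s+?p+2)*(?s+?p+1)*A)*((?s+?q+1)*B)/(((?s+1)*F)*((?s+?p+?q+3)*(?s+?p+?q+2)*(?s+?p+?q+1)*G))"
    unfolding CF_def by (simp only: T8 T9 T6 T10 S3)
  have e4: "CF p q (Suc s) = \<sigma>*((?s+?p+1)*A)*((?s+?q+1)*B)/(((?s+1)*F)*((?s+?p+?q+2)*(?s+?p+?q+1)*G))"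
    unfolding CF_def \<sigma>_def by (simp only: T4 T9 T6 T11)
  have nz: "A \<noteq> 0" "B \<noteq> 0" "F \<noteq> 0" "G \<noteq> 0" unfolding A_def B_def F_def G_def by simp_all
  show ?thesis unfolding e1 e2 e3 e4 by (rule alg) (use nz in simp_all)
qed

lemma CF_sym: "CF p q s = CF q p s"
  unfolding CF_def by (simp add: ac_simps)

lemma MM_CF: "MM p q (Suc s) = CF p q s"
proof (induction p q "Suc s" arbitrary: s rule: MM.induct)
  case (1 q)
  thus ?case using CF_base by simp
next
  case (2 p)
  thus ?case using CF_base[of "Suc p" s] CF_sym[of "Suc p" 0 s] by simp
next
  case (3 p q)
  thus ?case using CF_rec by simp
qed


lemma MM_zero: "MM (Suc p) (Suc q) 0 = 0"
proof -
  have "MM (Suc p) (Suc q) 0 = - (CF p (Suc q) 0 + CF (Suc p) q 0 + CF p q 0)"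
    using MM_CF[of p "Suc q" 0] MM_CF[of "Suc p" q 0] MM_CF[of p q 0] by simp
  also have "\<dots> = 0"
  proof -
    define A where "A = (fact p :: real)"
    define B where "B = (fact q :: real)"
    define G where "G = (fact (p+q) :: real)"
    define \<sigma> where "\<sigma> = ((-1::real)^(p+q))"
    have nz: "A \<noteq> 0" "B \<noteq> 0" "G \<noteq> 0" unfolding A_def B_def G_def by simp_all
    have n2: "real p + real q + 2 \<noteq> 0" "real p + real q + 1 \<noteq> 0" by linarith+
    have e1: "CF p (Suc q) 0 = (-\<sigma>) * A * ((real q + 1) * B) / ((real p + real q + 2) * (real p + real q + 1) * G)"
      unfolding CF_def A_def B_def G_def \<sigma>_def by (simp add: algebra_simps)
    have e2: "CF (Suc p) q 0 = (-\<sigma>) * ((real p + 1) * A) * B / ((real p + real q + 2) * (real p + real q + 1) * G)"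
      unfolding CF_def A_def B_def G_def \<sigma>_def by (simp add: algebra_simps)
    have e3: "CF p q 0 = \<sigma> * A * B / ((real p + real q + 1) * G)"
      unfolding CF_def A_def B_def G_def \<sigma>_def by (simp add: algebra_simps)
    define D where "D = (real p + real q + 2) * (real p + real q + 1) * G"
    have D: "D \<noteq> 0" unfolding D_def using nz n2 by simp
    have e3': "CF p q 0 = \<sigma> * A * B * (real p + real q + 2) / D"
      unfolding e3
    proof (rule iffD2[OF frac_eq_eq])
      show "(real p + real q + 1) * G \<noteq> 0" using n2 nz by simp
      show "D \<noteq> 0" by (rule D)
      show "\<sigma> * A * B * D = \<sigma> * A * B * (real p + real q + 2) * ((real p + real q + 1) * G)"
        unfolding D_def by (simp only: ac_simps)
    qed
    have "CF p (Suc q) 0 + CF (Suc p) q 0 + CF p q 0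
        = ((-\<sigma>) * A * ((real q + 1) * B) + (-\<sigma>) * ((real p + 1) * A) * B + \<sigma> * A * B * (real p + real q + 2)) / D"
      unfolding e1 e2 e3' D_def by (simp only: add_divide_distrib)
    also have "(-\<sigma>) * A * ((real q + 1) * B) + (-\<sigma>) * ((real p + 1) * A) * B + \<sigma> * A * B * (real p + real q + 2) = 0"
      by (simp add: algebra_simps)
    finally show ?thesis by simp
  qed
  finally show ?thesis .
qed


definition LL :: "'a set \<Rightarrow> ('a \<Rightarrow> 'a \<Rightarrow> bool) \<Rightarrow> 'a set set \<Rightarrow> 'a set set \<Rightarrow> nat \<Rightarrow> real" where
  "LL P le a c t = (\<Sum>b\<in>{b \<in> anc P le a. refines b c}. (-1)^(card b) / real (card b + t))"

definition SS :: "'a set \<Rightarrow> ('a \<Rightarrow> 'a \<Rightarrow> bool) \<Rightarrow> 'a set set \<Rightarrow> nat \<Rightarrow> real" where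
  "SS P le a t = (\<Sum>c\<in>anc P le a. LL P le a c t)"

lemma one_single: "\<forall>C. is_chain P le C \<longrightarrow> (\<forall>Z\<in>{X}. \<forall>Z'\<in>{X}. Z \<inter> C \<noteq> {} \<longrightarrow> Z' \<inter> C \<noteq> {} \<longrightarrow> Z = Z')"
  by blast

lemma refines_ins_iff:
  assumes ipb: "ispart P b" and Xb: "X \<in> b"
  shows "refines b (insert X c') \<longleftrightarrow> refines (b - {X}) c'"
proof
  assume r: "refines b (insert X c')"
  show "refines (b - {X}) c'"
    unfolding refines_def
  proof
    fix B assume B: "B \<in> b - {X}"
    then obtain D where D: "D \<in> insert X c'" "B \<subseteq> D" using r unfolding refines_def by blast
    show "\<exists>B'\<in>c'. B \<subseteq> B'"
    proof (cases "D = X")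
      case True
      obtain y where y: "y \<in> B" using ispart_ne[OF ipb] B by blast
      hence "y \<in> X" using D True by blast
      hence "B = X" using ispart_disj[OF ipb _ Xb y] B by blast
      thus ?thesis using B by blast
    next
      case False thus ?thesis using D by blast
    qed
  qed
next
  assume "refines (b - {X}) c'"
  thus "refines b (insert X c')" unfolding refines_def by blast
qed

lemma L1_set:
  assumes aO: "a \<in> Orp P le" and X: "X \<in> a" and c': "c' \<in> anc (P - X) le (a - {X})"
  shows "{b \<in> anc P le a. refines b (insert X c')} = {b \<in> anc P le a. X \<in> b \<and> refines (b - {X}) c'}"
proof (rule set_eqI, rule iffI)
  fix b assume "b \<in> {b \<in> anc P le a. refines b (insert X c')}"
  hence b: "b \<in> anc P le a" and r: "refines b (insert X c')" by blast+
  have ipa: "ispart P a" using aO by (rule Orp_ispart)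
  have ipb: "ispart P b" using anc_Orp[OF b] by (rule Orp_ispart)
  have ipc: "ispart (P - X) c'" using anc_Orp[OF c'] by (rule Orp_ispart)
  obtain x0 where x0: "x0 \<in> X" using ispart_ne[OF ipa X] by blast
  have "x0 \<in> P" using x0 ispart_sub[OF ipa X] by blast
  then obtain B where B: "B \<in> b" "x0 \<in> B" using ispart_cover[OF ipb] by blast
  have XB: "X \<subseteq> B" using anc_ref[OF b X B(1) x0 B(2)] .
  obtain D where D: "D \<in> insert X c'" "B \<subseteq> D" using r B(1) unfolding refines_def by blast
  have "D = X"
  proof (rule ccontr)
    assume "D \<noteq> X"
    hence "D \<in> c'" using D by blast
    hence "D \<subseteq> P - X" using ispart_sub[OF ipc] by blast
    thus False using D(2) B(2) x0 by blast
  qed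
  hence "B = X" using XB D by blast
  hence "X \<in> b" using B by simp
  thus "b \<in> {b \<in> anc P le a. X \<in> b \<and> refines (b - {X}) c'}"
    using refines_ins_iff[OF ipb] r b by blast
next
  fix b assume "b \<in> {b \<in> anc P le a. X \<in> b \<and> refines (b - {X}) c'}"
  hence b: "b \<in> anc P le a" "X \<in> b" "refines (b - {X}) c'" by blast+
  have ipb: "ispart P b" using anc_Orp[OF b(1)] by (rule Orp_ispart)
  show "b \<in> {b \<in> anc P le a. refines b (insert X c')}"
    using refines_ins_iff[OF ipb b(2)] b by blast
qed

lemma L1:
  assumes fin: "finite P" and aO: "a \<in> Orp P le" and X: "X \<in> a" and Xup: "upcl P le X"
    and c': "c' \<in> anc (P - X) le (a - {X})"
  shows "LL P le a (insert X c') t = - LL (P - X) le (a - {X}) c' (Suc t)"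
proof -
  have A: "{X} \<subseteq> a" "{X} \<noteq> {}" "X = \<Union>{X}" using X by auto
  have "LL P le a (insert X c') t = (\<Sum>b\<in>{b \<in> anc P le a. X \<in> b \<and> refines (b - {X}) c'}. (-1)^(card b) / real (card b + t))"
    unfolding LL_def L1_set[OF aO X c'] ..
  also have "\<dots> = (\<Sum>b'\<in>{b' \<in> anc (P - X) le (a - {X}). refines b' c'}. (-1)^(card (insert X b')) / real (card (insert X b') + t))"
    by (rule Rem_sum[OF fin aO A Xup one_single])
  also have "\<dots> = (\<Sum>b'\<in>{b' \<in> anc (P - X) le (a - {X}). refines b' c'}. - ((-1)^(card b') / real (card b' + Suc t)))"
  proof (rule sum.cong)
    fix b' assume "b' \<in> {b' \<in> anc (P - X) le (a - {X}). refines b' c'}"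
    hence b': "b' \<in> anc (P - X) le (a - {X})" by blast
    have "X \<notin> b'" using Rem_bwd(2)[OF fin aO A Xup one_single b'] .
    moreover have "finite b'" using ispart_finite[of "P - X" b'] fin Orp_ispart[OF anc_Orp[OF b']] by simp
    ultimately have "card (insert X b') = Suc (card b')" by simp
    thus "(-1)^(card (insert X b')) / real (card (insert X b') + t) = - ((-1)^(card b') / real (card b' + Suc t))"
      by simp
  qed simp
  also have "\<dots> = - LL (P - X) le (a - {X}) c' (Suc t)"
    unfolding LL_def by (simp add: sum_negf)
  finally show ?thesis .
qed


context H
begin

lemma Xup: "upcl P le X"
  using pure_up[OF twoch_sym[OF tc] aO X(1) X(3) X(2) m1(2)] .

lemma Yup: "upcl P le Y"
  using pure_up[OF tc aO Y(1) Y(3) Y(2) m2(2)] .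

lemma XYup: "upcl P le (X \<union> Y)"
  using Xup Yup unfolding upcl_def by blast

lemma oneXY: "\<forall>C. is_chain P le C \<longrightarrow> (\<forall>Z\<in>{X, Y}. \<forall>Z'\<in>{X, Y}. Z \<inter> C \<noteq> {} \<longrightarrow> Z' \<inter> C \<noteq> {} \<longrightarrow> Z = Z')"
proof (intro allI impI ballI)
  fix C Z Z' assume C: "is_chain P le C" and ZZ: "Z \<in> {X, Y}" "Z' \<in> {X, Y}" "Z \<inter> C \<noteq> {}" "Z' \<inter> C \<noteq> {}"
  show "Z = Z'"
  proof (rule ccontr)
    assume "Z \<noteq> Z'"
    hence "X \<inter> C \<noteq> {}" "Y \<inter> C \<noteq> {}" using ZZ by blast+
    moreover have "C \<subseteq> C1 \<or> C \<subseteq> C2" using chains_in[OF tc C] .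
    ultimately show False using X(3) Y(3) twoch_disj[OF tc] by blast
  qed
qed

lemma fin: "finite P" using twoch_finite[OF tc] .

lemma L2_set:
  assumes c': "c' \<in> anc (P - (X \<union> Y)) le (a - {X, Y})"
  shows "{b \<in> anc P le a. refines b (insert (X \<union> Y) c')} =
     {b \<in> anc P le a. X \<union> Y \<in> b \<and> refines (b - {X \<union> Y}) c'}
   \<union> {b \<in> anc P le a. X \<in> b \<and> (Y \<in> b - {X} \<and> refines (b - {X} - {Y}) c')}"
proof (rule set_eqI, rule iffI)
  fix b assume "b \<in> {b \<in> anc P le a. refines b (insert (X \<union> Y) c')}"
  hence b: "b \<in> anc P le a" and r: "refines b (insert (X \<union> Y) c')" by blast+
  have ipb: "ispart P b" using anc_Orp[OF b] by (rule Orp_ispart)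
  have ipc: "ispart (P - (X \<union> Y)) c'" using anc_Orp[OF c'] by (rule Orp_ispart)
  have PC: "P = C1 \<union> C2" using twoch_P[OF tc] .
  have m1P: "m1 \<in> P" "m2 \<in> P" using m1 m2 PC by blast+
  obtain BX where BX: "BX \<in> b" "m1 \<in> BX" using ispart_cover[OF ipb m1P(1)] by blast
  obtain BY where BY: "BY \<in> b" "m2 \<in> BY" using ispart_cover[OF ipb m1P(2)] by blast
  have XBX: "X \<subseteq> BX" using anc_ref[OF b X(1) BX(1) X(2) BX(2)] .
  have YBY: "Y \<subseteq> BY" using anc_ref[OF b Y(1) BY(1) Y(2) BY(2)] .
  have inXY: "B \<subseteq> X \<union> Y" if hB: "B \<in> b" "m \<in> B" "m \<in> X \<union> Y" for B m
  proof -
    obtain D where D: "D \<in> insert (X \<union> Y) c'" "B \<subseteq> D" using r hB(1) unfolding refines_def by blast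
    have "D = X \<union> Y"
    proof (rule ccontr)
      assume "D \<noteq> X \<union> Y"
      hence "D \<subseteq> P - (X \<union> Y)" using D ispart_sub[OF ipc] by blast
      thus False using D(2) hB(2,3) by blast
    qed
    thus ?thesis using D by blast
  qed
  have BXs: "BX \<subseteq> X \<union> Y" using inXY[OF BX] X(2) by blast
  have BYs: "BY \<subseteq> X \<union> Y" using inXY[OF BY] Y(2) by blast
  have BX1: "BX \<inter> C1 = X \<inter> C1" using anc_blk[OF aO b BX(1) X(1) BX(2) X(2) m1(1) twoch_C1[OF tc]] .
  have BY2: "BY \<inter> C2 = Y \<inter> C2" using anc_blk[OF aO b BY(1) Y(1) BY(2) Y(2) m2(1) twoch_C1[OF twoch_sym[OF tc]]] .
  have memb: "(X \<union> Y \<in> b) \<or> (X \<in> b \<and> Y \<in> b)"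
  proof (cases "BX = BY")
    case True
    hence "BX = X \<union> Y" using XBX YBY BXs BYs by blast
    thus ?thesis using BX(1) by simp
  next
    case False
    have dj: "BX \<inter> BY = {}"
    proof (rule ccontr)
      assume "BX \<inter> BY \<noteq> {}"
      then obtain u where "u \<in> BX" "u \<in> BY" by blast
      thus False using ispart_disj[OF ipb BX(1) BY(1)] False by blast
    qed
    have "BX = X" using BXs XBX YBY dj by blast
    moreover have "BY = Y" using BYs XBX YBY dj by blast
    ultimately show ?thesis using BX(1) BY(1) by simp
  qed
  thus "b \<in> {b \<in> anc P le a. X \<union> Y \<in> b \<and> refines (b - {X \<union> Y}) c'}
   \<union> {b \<in> anc P le a. X \<in> b \<and> (Y \<in> b - {X} \<and> refines (b - {X} - {Y}) c')}"
  proof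
    assume XYb: "X \<union> Y \<in> b"
    thus ?thesis using refines_ins_iff[OF ipb XYb] r b by blast
  next
    assume XYb: "X \<in> b \<and> Y \<in> b"
    have "refines (b - {X} - {Y}) c'"
      unfolding refines_def
    proof
      fix B assume B: "B \<in> b - {X} - {Y}"
      then obtain D where D: "D \<in> insert (X \<union> Y) c'" "B \<subseteq> D" using r unfolding refines_def by blast
      show "\<exists>B'\<in>c'. B \<subseteq> B'"
      proof (cases "D = X \<union> Y")
        case True
        obtain y where y: "y \<in> B" using ispart_ne[OF ipb] B by blast
        hence "y \<in> X \<or> y \<in> Y" using D True by blast
        hence "B = X \<or> B = Y" using ispart_disj[OF ipb _ _ y] B XYb by blast
        thus ?thesis using B by blast
      next
        case False thus ?thesis using D by blast
      qed
    qed
    thus ?thesis using XYb b XY_ne by blast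
  qed
next
  fix b assume "b \<in> {b \<in> anc P le a. X \<union> Y \<in> b \<and> refines (b - {X \<union> Y}) c'}
   \<union> {b \<in> anc P le a. X \<in> b \<and> (Y \<in> b - {X} \<and> refines (b - {X} - {Y}) c')}"
  thus "b \<in> {b \<in> anc P le a. refines b (insert (X \<union> Y) c')}"
  proof
    assume "b \<in> {b \<in> anc P le a. X \<union> Y \<in> b \<and> refines (b - {X \<union> Y}) c'}"
    hence b: "b \<in> anc P le a" "X \<union> Y \<in> b" "refines (b - {X \<union> Y}) c'" by blast+
    have ipb: "ispart P b" using anc_Orp[OF b(1)] by (rule Orp_ispart)
    show ?thesis using refines_ins_iff[OF ipb b(2)] b by blast
  next
    assume "b \<in> {b \<in> anc P le a. X \<in> b \<and> (Y \<in> b - {X} \<and> refines (b - {X} - {Y}) c')}"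
    hence b: "b \<in> anc P le a" "refines (b - {X} - {Y}) c'" by blast+
    have "refines b (insert (X \<union> Y) c')"
      unfolding refines_def
    proof
      fix B assume "B \<in> b"
      show "\<exists>B'\<in>insert (X \<union> Y) c'. B \<subseteq> B'"
      proof (cases "B = X \<or> B = Y")
        case True thus ?thesis by blast
      next
        case False
        hence "B \<in> b - {X} - {Y}" using \<open>B \<in> b\<close> by blast
        thus ?thesis using b(2) unfolding refines_def by blast
      qed
    qed
    thus ?thesis using b by blast
  qed
qed


lemma XYsub: "{X, Y} \<subseteq> a" "{X, Y} \<noteq> {}" "X \<union> Y = \<Union>{X, Y}" using X Y by auto

lemma L2:
  assumes c': "c' \<in> anc (P - (X \<union> Y)) le (a - {X, Y})"
  shows "LL P le a (insert (X \<union> Y) c') t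
     = - LL (P - (X \<union> Y)) le (a - {X, Y}) c' (Suc t) + LL (P - (X \<union> Y)) le (a - {X, Y}) c' (Suc (Suc t))"
proof -
  define \<phi> where "\<phi> b = (-1)^(card b) / real (card b + t)" for b :: "'a set set"
  let ?Sa = "{b \<in> anc P le a. X \<union> Y \<in> b \<and> refines (b - {X \<union> Y}) c'}"
  let ?Sb = "{b \<in> anc P le a. X \<in> b \<and> (Y \<in> b - {X} \<and> refines (b - {X} - {Y}) c')}"
  have finA: "finite (anc P le a)" using anc_finite[OF fin] .
  have dj: "?Sa \<inter> ?Sb = {}" using not_both_XY by blast
  have "LL P le a (insert (X \<union> Y) c') t = sum \<phi> (?Sa \<union> ?Sb)"
    unfolding LL_def L2_set[OF c'] \<phi>_def ..
  also have "\<dots> = sum \<phi> ?Sa + sum \<phi> ?Sb"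
    by (rule sum.union_disjoint) (use finA dj in auto)
  also have "sum \<phi> ?Sa = - LL (P - (X \<union> Y)) le (a - {X, Y}) c' (Suc t)"
  proof -
    have "sum \<phi> ?Sa = (\<Sum>b'\<in>{b' \<in> anc (P - (X \<union> Y)) le (a - {X, Y}). refines b' c'}. \<phi> (insert (X \<union> Y) b'))"
      by (rule Rem_sum[OF fin aO XYsub XYup oneXY])
    also have "\<dots> = (\<Sum>b'\<in>{b' \<in> anc (P - (X \<union> Y)) le (a - {X, Y}). refines b' c'}. - ((-1)^(card b') / real (card b' + Suc t)))"
    proof (rule sum.cong)
      fix b' assume "b' \<in> {b' \<in> anc (P - (X \<union> Y)) le (a - {X, Y}). refines b' c'}"
      hence b': "b' \<in> anc (P - (X \<union> Y)) le (a - {X, Y})" by blast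
      have "X \<union> Y \<notin> b'" using Rem_bwd(2)[OF fin aO XYsub XYup oneXY b'] .
      moreover have "finite b'" using ispart_finite[of "P - (X \<union> Y)" b'] fin Orp_ispart[OF anc_Orp[OF b']] by simp
      ultimately have "card (insert (X \<union> Y) b') = Suc (card b')" by simp
      thus "\<phi> (insert (X \<union> Y) b') = - ((-1)^(card b') / real (card b' + Suc t))"
        unfolding \<phi>_def by simp
    qed simp
    finally show ?thesis unfolding LL_def by (simp add: sum_negf)
  qed
  also have "sum \<phi> ?Sb = LL (P - (X \<union> Y)) le (a - {X, Y}) c' (Suc (Suc t))"
  proof -
    have AX: "{X} \<subseteq> a" "{X} \<noteq> {}" "X = \<Union>{X}" using X by auto
    have "sum \<phi> ?Sb = (\<Sum>b1\<in>{b1 \<in> anc (P - X) le (a - {X}). Y \<in> b1 \<and> refines (b1 - {Y}) c'}. \<phi> (insert X b1))"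
      by (rule Rem_sum[OF fin aO AX Xup one_single])
    also have "\<dots> = (\<Sum>b2\<in>{b2 \<in> anc (P - X - Y) le (a - {X} - {Y}). refines b2 c'}. \<phi> (insert X (insert Y b2)))"
    proof -
      have finX: "finite (P - X)" using fin by simp
      have aXO: "a - {X} \<in> Orp (P - X) le" using Orp_remove[OF aO, of "{X}"] X(1) by simp
      have AY: "{Y} \<subseteq> a - {X}" "{Y} \<noteq> {}" "Y = \<Union>{Y}" using Y(1) XY_ne by auto
      have YupX: "upcl (P - X) le Y" using Yup unfolding upcl_def by blast
      show ?thesis by (rule Rem_sum[OF finX aXO AY YupX one_single, where \<phi>="\<lambda>b1. \<phi> (insert X b1)"])
    qed
    also have "\<dots> = (\<Sum>b2\<in>{b2 \<in> anc (P - (X \<union> Y)) le (a - {X, Y}). refines b2 c'}. (-1)^(card b2) / real (card b2 + Suc (Suc t)))"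
    proof -
      have eqs: "P - X - Y = P - (X \<union> Y)" "a - {X} - {Y} = a - {X, Y}" by blast+
      show ?thesis unfolding eqs
      proof (rule sum.cong)
        fix b2 assume "b2 \<in> {b2 \<in> anc (P - (X \<union> Y)) le (a - {X, Y}). refines b2 c'}"
        hence b2: "b2 \<in> anc (P - (X \<union> Y)) le (a - {X, Y})" by blast
        have ip2: "ispart (P - (X \<union> Y)) b2" using anc_Orp[OF b2] by (rule Orp_ispart)
        have "Y \<notin> b2" using ispart_sub[OF ip2] Y(2) by blast
        moreover have "X \<notin> b2" using ispart_sub[OF ip2] X(2) by blast
        moreover have "finite b2" using ispart_finite[OF _ ip2] fin by simp
        ultimately have "card (insert X (insert Y b2)) = Suc (Suc (card b2))" using XY_ne by simp
        thus "\<phi> (insert X (insert Y b2)) = (-1)^(card b2) / real (card b2 + Suc (Suc t))"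
          unfolding \<phi>_def by simp
      qed simp
    qed
    finally show ?thesis unfolding LL_def .
  qed
  finally show ?thesis .
qed


lemma SR: "SS P le a t = - (SS (P - X) le (a - {X}) (Suc t) + SS (P - Y) le (a - {Y}) (Suc t)
                             + SS (P - (X \<union> Y)) le (a - {X, Y}) (Suc t))"
proof -
  have h: "H P le C1 C2 a m1 m2 X Y" by (rule H_axioms)
  define g where "g c = LL P le a c t" for c
  let ?A = "{b \<in> anc P le a. X \<in> b \<and> True}"
  let ?B = "{b \<in> anc P le a. Y \<in> b \<and> X \<notin> b - {Y}}"
  let ?C = "{b \<in> anc P le a. X \<union> Y \<in> b \<and> True}"
  have finA: "finite (anc P le a)" using anc_finite[OF fin] .
  have AX: "{X} \<subseteq> a" "{X} \<noteq> {}" "X = \<Union>{X}" using X by auto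
  have AY: "{Y} \<subseteq> a" "{Y} \<noteq> {}" "Y = \<Union>{Y}" using Y by auto
  have "SS P le a t = sum g ((?A \<union> ?B) \<union> ?C)" unfolding SS_def g_def using H_split[OF h] by simp
  also have "\<dots> = sum g ?A + sum g ?B + sum g ?C"
    using H_split_disj[OF h] finA by (simp add: sum.union_disjoint)
  also have "sum g ?A = - SS (P - X) le (a - {X}) (Suc t)"
  proof -
    have "sum g ?A = (\<Sum>c'\<in>{c' \<in> anc (P - X) le (a - {X}). True}. g (insert X c'))"
      by (rule Rem_sum[OF fin aO AX Xup one_single])
    also have "\<dots> = (\<Sum>c'\<in>anc (P - X) le (a - {X}). - LL (P - X) le (a - {X}) c' (Suc t))"
      unfolding g_def by (rule sum.cong) (auto simp: L1[OF fin aO X(1) Xup])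
    finally show ?thesis unfolding SS_def by (simp add: sum_negf)
  qed
  also have "sum g ?B = - SS (P - Y) le (a - {Y}) (Suc t) - SS (P - (X \<union> Y)) le (a - {X, Y}) (Suc (Suc t))"
  proof -
    define g2 where "g2 c' = LL (P - Y) le (a - {Y}) c' (Suc t)" for c'
    have finY: "finite (P - Y)" using fin by simp
    have aYO: "a - {Y} \<in> Orp (P - Y) le" using Orp_remove[OF aO, of "{Y}"] Y(1) by simp
    have AX2: "{X} \<subseteq> a - {Y}" "{X} \<noteq> {}" "X = \<Union>{X}" using X(1) XY_ne by auto
    have XupY: "upcl (P - Y) le X" using Xup unfolding upcl_def by blast
    have XaY: "X \<in> a - {Y}" using X(1) XY_ne by blast
    have finAY: "finite (anc (P - Y) le (a - {Y}))" using anc_finite[OF finY] .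
    have "sum g ?B = (\<Sum>c'\<in>{c' \<in> anc (P - Y) le (a - {Y}). X \<notin> c'}. g (insert Y c'))"
      by (rule Rem_sum[OF fin aO AY Yup one_single])
    also have "\<dots> = (\<Sum>c'\<in>{c' \<in> anc (P - Y) le (a - {Y}). X \<notin> c'}. - g2 c')"
      unfolding g_def g2_def by (rule sum.cong) (auto simp: L1[OF fin aO Y(1) Yup])
    also have "\<dots> = - (\<Sum>c'\<in>{c' \<in> anc (P - Y) le (a - {Y}). X \<notin> c'}. g2 c')" by (simp add: sum_negf)
    also have "(\<Sum>c'\<in>{c' \<in> anc (P - Y) le (a - {Y}). X \<notin> c'}. g2 c')
        = SS (P - Y) le (a - {Y}) (Suc t) - (\<Sum>c'\<in>{c' \<in> anc (P - Y) le (a - {Y}). X \<in> c' \<and> True}. g2 c')"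
    proof -
      have "anc (P - Y) le (a - {Y}) = {c' \<in> anc (P - Y) le (a - {Y}). X \<notin> c'} \<union> {c' \<in> anc (P - Y) le (a - {Y}). X \<in> c' \<and> True}"
        by blast
      hence "SS (P - Y) le (a - {Y}) (Suc t) = (\<Sum>c'\<in>{c' \<in> anc (P - Y) le (a - {Y}). X \<notin> c'}. g2 c') + (\<Sum>c'\<in>{c' \<in> anc (P - Y) le (a - {Y}). X \<in> c' \<and> True}. g2 c')"
        unfolding SS_def g2_def using finAY by (metis (no_types, lifting) sum.union_disjoint disjoint_iff finite_Un mem_Collect_eq)
      thus ?thesis by simp
    qed
    also have "(\<Sum>c'\<in>{c' \<in> anc (P - Y) le (a - {Y}). X \<in> c' \<and> True}. g2 c') = - SS (P - (X \<union> Y)) le (a - {X, Y}) (Suc (Suc t))"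
    proof -
      have "(\<Sum>c'\<in>{c' \<in> anc (P - Y) le (a - {Y}). X \<in> c' \<and> True}. g2 c')
          = (\<Sum>c''\<in>{c'' \<in> anc (P - Y - X) le (a - {Y} - {X}). True}. g2 (insert X c''))"
        by (rule Rem_sum[OF finY aYO AX2 XupY one_single])
      also have "\<dots> = (\<Sum>c''\<in>anc (P - Y - X) le (a - {Y} - {X}). - LL (P - Y - X) le (a - {Y} - {X}) c'' (Suc (Suc t)))"
        unfolding g2_def by (rule sum.cong) (auto simp: L1[OF finY aYO XaY XupY])
      moreover have e: "P - Y - X = P - (X \<union> Y)" "a - {Y} - {X} = a - {X, Y}" by blast+
      ultimately show ?thesis unfolding SS_def e by (simp add: sum_negf)
    qed
    finally show ?thesis by simp
  qed
  also have "sum g ?C = - SS (P - (X \<union> Y)) le (a - {X, Y}) (Suc t) + SS (P - (X \<union> Y)) le (a - {X, Y}) (Suc (Suc t))"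
  proof -
    have "sum g ?C = (\<Sum>c'\<in>{c' \<in> anc (P - (X \<union> Y)) le (a - {X, Y}). True}. g (insert (X \<union> Y) c'))"
      by (rule Rem_sum[OF fin aO XYsub XYup oneXY])
    also have "\<dots> = (\<Sum>c'\<in>anc (P - (X \<union> Y)) le (a - {X, Y}).
         - LL (P - (X \<union> Y)) le (a - {X, Y}) c' (Suc t) + LL (P - (X \<union> Y)) le (a - {X, Y}) c' (Suc (Suc t)))"
      unfolding g_def by (rule sum.cong) (auto simp: L2)
    finally show ?thesis unfolding SS_def by (simp add: sum.distrib sum_negf sum_subtractf)
  qed
  finally show ?thesis by simp
qed

end


lemma SS_chain:
  assumes "anc P le a = {a}"
  shows "SS P le a t = (-1)^(card a) / real (card a + t)"
proof -
  have "{b \<in> anc P le a. refines b a} = {a}" using assms refines_refl by blast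
  thus ?thesis unfolding SS_def LL_def assms by simp
qed

lemma cnt_remove:
  assumes ipa: "ispart P a" and A: "A \<subseteq> a"
  shows "{B \<in> a - A. B \<subseteq> C - \<Union>A} = {B \<in> a. B \<subseteq> C} - A"
proof
  show "{B \<in> a - A. B \<subseteq> C - \<Union>A} \<subseteq> {B \<in> a. B \<subseteq> C} - A" by blast
  show "{B \<in> a. B \<subseteq> C} - A \<subseteq> {B \<in> a - A. B \<subseteq> C - \<Union>A}"
  proof
    fix B assume B: "B \<in> {B \<in> a. B \<subseteq> C} - A"
    have "B \<inter> \<Union>A = {}"
    proof (rule ccontr)
      assume "B \<inter> \<Union>A \<noteq> {}"
      then obtain z Z where z: "z \<in> B" "Z \<in> A" "z \<in> Z" by blast
      hence "B = Z" using ispart_disj[OF ipa, of B Z z] B A by blast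
      thus False using B z by blast
    qed
    thus "B \<in> {B \<in> a - A. B \<subseteq> C - \<Union>A}" using B by blast
  qed
qed

lemma pure_remove:
  assumes "\<forall>B\<in>a. B \<subseteq> C1 \<or> B \<subseteq> C2" "ispart P a" "A \<subseteq> a"
  shows "\<forall>B\<in>a - A. B \<subseteq> C1 - \<Union>A \<or> B \<subseteq> C2 - \<Union>A"
proof
  fix B assume B: "B \<in> a - A"
  have "B \<inter> \<Union>A = {}"
  proof (rule ccontr)
    assume "B \<inter> \<Union>A \<noteq> {}"
    then obtain z Z where z: "z \<in> B" "Z \<in> A" "z \<in> Z" by blast
    hence "B = Z" using ispart_disj[OF assms(2), of B Z z] B assms(3) by blast
    thus False using B z by blast
  qed
  thus "B \<subseteq> C1 - \<Union>A \<or> B \<subseteq> C2 - \<Union>A" using assms(1) B by blast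
qed

theorem S_MM:
  assumes "twoch P le C1 C2" "a \<in> Orp P le" "\<forall>B\<in>a. B \<subseteq> C1 \<or> B \<subseteq> C2"
  shows "SS P le a t = MM (card {B \<in> a. B \<subseteq> C1}) (card {B \<in> a. B \<subseteq> C2}) t"
  using assms
proof (induction "card P" arbitrary: P C1 C2 a t rule: less_induct)
  case less
  note tc = less.prems(1) and aO = less.prems(2) and pure = less.prems(3)
  have fin: "finite P" using twoch_finite[OF tc] .
  have ipa: "ispart P a" using aO by (rule Orp_ispart)
  have PC: "P = C1 \<union> C2" using twoch_P[OF tc] .
  have none: "{B \<in> a. B \<subseteq> {}} = {}" using ispart_ne[OF ipa] by blast
  have alla: "{B \<in> a. B \<subseteq> P} = a" using ispart_sub[OF ipa] by blast
  show ?case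
  proof (cases "C2 = {}")
    case True
    have "anc P le a = {a}" using anc_chain[OF aO twoch_chainP[OF tc True]] .
    moreover have "{B \<in> a. B \<subseteq> C1} = a" using alla PC True by simp
    moreover have "{B \<in> a. B \<subseteq> C2} = {}" using True none by blast
    ultimately have "MM (card {B \<in> a. B \<subseteq> C1}) (card {B \<in> a. B \<subseteq> C2}) t = (-1)^(card a) / real (card a + t)"
      by (simp only: card.empty MM_q0)
    thus ?thesis using SS_chain[OF \<open>anc P le a = {a}\<close>, of t] by simp
  next
    case C2ne: False
    show ?thesis
    proof (cases "C1 = {}")
      case True
      have "anc P le a = {a}" using anc_chain[OF aO twoch_chainP[OF twoch_sym[OF tc] True]] .
      moreover have "{B \<in> a. B \<subseteq> C2} = a" using alla PC True by simp
      moreover have "{B \<in> a. B \<subseteq> C1} = {}" using True none by blast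
      ultimately have "MM (card {B \<in> a. B \<subseteq> C1}) (card {B \<in> a. B \<subseteq> C2}) t = (-1)^(card a) / real (card a + t)"
        by (simp only: card.empty MM.simps(1))
      thus ?thesis using SS_chain[OF \<open>anc P le a = {a}\<close>, of t] by simp
    next
      case C1ne: False
      obtain m1 where m1: "m1 \<in> C1" "\<forall>z\<in>C1. le z m1" using twoch_max1[OF tc C1ne] by blast
      obtain m2 where m2: "m2 \<in> C2" "\<forall>z\<in>C2. le z m2" using twoch_max1[OF twoch_sym[OF tc] C2ne] by blast
      obtain X where X: "X \<in> a" "m1 \<in> X" using ispart_cover[OF ipa, of m1] m1(1) PC by blast
      obtain Y where Y: "Y \<in> a" "m2 \<in> Y" using ispart_cover[OF ipa, of m2] m2(1) PC by blast
      have dj: "C1 \<inter> C2 = {}" using twoch_disj[OF tc] .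
      have X1: "X \<subseteq> C1" using pure X m1(1) dj by blast
      have Y2: "Y \<subseteq> C2" using pure Y m2(1) dj by blast
      have h: "H P le C1 C2 a m1 m2 X Y" unfolding H_def using tc aO m1 m2 X Y X1 Y2 by blast
      have XY: "X \<noteq> Y" using H.XY_ne[OF h] .
      have XnC2: "\<not> X \<subseteq> C2" using X(2) m1(1) dj by blast
      have YnC1: "\<not> Y \<subseteq> C1" using Y(2) m2(1) dj by blast
      define p where "p = card {B \<in> a. B \<subseteq> C1}"
      define q where "q = card {B \<in> a. B \<subseteq> C2}"
      have fa: "finite a" using ispart_finite[OF fin ipa] .
      have p1: "p \<ge> 1" unfolding p_def using X X1 fa by (metis (no_types, lifting) One_nat_def Suc_leI card_gt_0_iff empty_iff mem_Collect_eq finite_subset subsetI)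
      have q1: "q \<ge> 1" unfolding q_def using Y Y2 fa by (metis (no_types, lifting) One_nat_def Suc_leI card_gt_0_iff empty_iff mem_Collect_eq finite_subset subsetI)
      obtain p' q' where pq: "p = Suc p'" "q = Suc q'" using p1 q1 by (metis Suc_le_D One_nat_def)
      have fin1: "finite {B \<in> a. B \<subseteq> C1}" "finite {B \<in> a. B \<subseteq> C2}" using fa by simp_all
      have IH: "SS P' le a' t' = MM (card {B \<in> a'. B \<subseteq> C1'}) (card {B \<in> a'. B \<subseteq> C2'}) t'"
        if "card P' < card P" "twoch P' le C1' C2'" "a' \<in> Orp P' le" "\<forall>B\<in>a'. B \<subseteq> C1' \<or> B \<subseteq> C2'"
        for P' C1' C2' a' t' using less.hyps that by blast
      have rec: "\<And>A. A \<subseteq> a \<Longrightarrow> A \<noteq> {} \<Longrightarrow> SS (P - \<Union>A) le (a - A) (Suc t)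
           = MM (card ({B \<in> a. B \<subseteq> C1} - A)) (card ({B \<in> a. B \<subseteq> C2} - A)) (Suc t)"
      proof -
        fix A assume A: "A \<subseteq> a" "A \<noteq> {}"
        have "card (P - \<Union>A) < card P"
        proof -
          obtain Z where "Z \<in> A" using A(2) by blast
          hence "Z \<noteq> {}" "Z \<subseteq> \<Union>A" using ispart_ne[OF ipa] A(1) by blast+
          moreover have "\<Union>A \<subseteq> P" using ispart_sub[OF ipa] A(1) by blast
          ultimately show ?thesis using card_remove_lt[OF fin] by blast
        qed
        moreover have "twoch (P - \<Union>A) le (C1 - \<Union>A) (C2 - \<Union>A)" using twoch_remove[OF tc] .
        moreover have "a - A \<in> Orp (P - \<Union>A) le" using Orp_remove[OF aO A(1)] .
        moreover have "\<forall>B\<in>a - A. B \<subseteq> C1 - \<Union>A \<or> B \<subseteq> C2 - \<Union>A" using pure_remove[OF pure ipa A(1)] .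
        ultimately have "SS (P - \<Union>A) le (a - A) (Suc t) = MM (card {B \<in> a - A. B \<subseteq> C1 - \<Union>A}) (card {B \<in> a - A. B \<subseteq> C2 - \<Union>A}) (Suc t)"
          by (rule IH)
        thus "SS (P - \<Union>A) le (a - A) (Suc t) = MM (card ({B \<in> a. B \<subseteq> C1} - A)) (card ({B \<in> a. B \<subseteq> C2} - A)) (Suc t)"
          using cnt_remove[OF ipa A(1)] by simp
      qed
      have rX: "SS (P - X) le (a - {X}) (Suc t) = MM p' (Suc q') (Suc t)"
      proof -
        have "card ({B \<in> a. B \<subseteq> C1} - {X}) = p'" using pq X(1) X1 fin1 unfolding p_def by simp
        moreover have "{B \<in> a. B \<subseteq> C2} - {X} = {B \<in> a. B \<subseteq> C2}" using XnC2 by blast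
        ultimately show ?thesis using rec[of "{X}"] X(1) pq q_def by simp
      qed
      have rY: "SS (P - Y) le (a - {Y}) (Suc t) = MM (Suc p') q' (Suc t)"
      proof -
        have "card ({B \<in> a. B \<subseteq> C2} - {Y}) = q'" using pq Y(1) Y2 fin1 unfolding q_def by simp
        moreover have "{B \<in> a. B \<subseteq> C1} - {Y} = {B \<in> a. B \<subseteq> C1}" using YnC1 by blast
        ultimately show ?thesis using rec[of "{Y}"] Y(1) pq p_def by simp
      qed
      have rXY: "SS (P - (X \<union> Y)) le (a - {X, Y}) (Suc t) = MM p' q' (Suc t)"
      proof -
        have "{B \<in> a. B \<subseteq> C1} - {X, Y} = {B \<in> a. B \<subseteq> C1} - {X}" using YnC1 by blast
        hence "card ({B \<in> a. B \<subseteq> C1} - {X, Y}) = p'" using pq X(1) X1 fin1 unfolding p_def by simp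
        moreover have "{B \<in> a. B \<subseteq> C2} - {X, Y} = {B \<in> a. B \<subseteq> C2} - {Y}" using XnC2 by blast
        hence "card ({B \<in> a. B \<subseteq> C2} - {X, Y}) = q'" using pq Y(1) Y2 fin1 unfolding q_def by simp
        moreover have "\<Union>{X, Y} = X \<union> Y" by simp
        ultimately show ?thesis using rec[of "{X, Y}"] X(1) Y(1) by simp
      qed
      have "SS P le a t = - (MM p' (Suc q') (Suc t) + MM (Suc p') q' (Suc t) + MM p' q' (Suc t))"
        using H.SR[OF h, of t] rX rY rXY by simp
      also have "\<dots> = MM p q t" using pq by simp
      finally show ?thesis unfolding p_def q_def .
    qed
  qed
qed


lemma part2:
  assumes tc: "twoch P le C1 C2" and aO: "a \<in> Orp P le" and C1ne: "C1 \<noteq> {}" and C2ne: "C2 \<noteq> {}"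
    and pure: "\<forall>B\<in>a. B \<subseteq> C1 \<or> B \<subseteq> C2"
  shows "dfrak P le a = 0"
proof -
  have fin: "finite P" using twoch_finite[OF tc] .
  have finA: "finite (anc P le a)" using anc_finite[OF fin] .
  have PC: "P = C1 \<union> C2" using twoch_P[OF tc] .
  define \<phi> where "\<phi> b = (-1)^(card b) / real (card b + 0)" for b :: "'a set set"
  have tm: "(-1) ^ (card b - 1) * real (opfact P le b) / real (card b)
      = (\<Sum>c\<in>{c \<in> anc P le a. refines b c}. - \<phi> b)" if b: "b \<in> anc P le a" for b
  proof -
    have "opfact P le b = card (anc P le b)" using part1[OF tc anc_Orp[OF b]] .
    also have "\<dots> = card {c \<in> anc P le a. refines b c}" using anc_trans[OF b] by simp
    finally have o: "opfact P le b = card {c \<in> anc P le a. refines b c}" .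
    have ipb: "ispart P b" using anc_Orp[OF b] by (rule Orp_ispart)
    have "finite b" using ispart_finite[OF fin ipb] .
    moreover have "b \<noteq> {}"
    proof -
      obtain x where "x \<in> C1" using C1ne by blast
      hence "x \<in> P" using PC by blast
      thus ?thesis using ispart_cover[OF ipb] by blast
    qed
    ultimately have "card b \<ge> 1" by (simp add: Suc_leI card_gt_0_iff)
    then obtain n where n: "card b = Suc n" by (metis Suc_le_D One_nat_def)
    have "(\<Sum>c\<in>{c \<in> anc P le a. refines b c}. - \<phi> b) = real (card {c \<in> anc P le a. refines b c}) * (- \<phi> b)"
      by simp
    also have "\<dots> = (-1) ^ (card b - 1) * real (opfact P le b) / real (card b)"
      unfolding o \<phi>_def n by simp
    finally show ?thesis by simp
  qed
  have "dfrak P le a = (\<Sum>b\<in>anc P le a. \<Sum>c\<in>{c \<in> anc P le a. refines b c}. - \<phi> b)"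
    unfolding dfrak_def using tm by (intro sum.cong) auto
  also have "\<dots> = (\<Sum>c\<in>anc P le a. \<Sum>b\<in>{b \<in> anc P le a. refines b c}. - \<phi> b)"
    by (rule sum.swap_restrict[OF finA finA])
  also have "\<dots> = - SS P le a 0"
    unfolding SS_def LL_def \<phi>_def by (simp add: sum_negf)
  also have "SS P le a 0 = MM (card {B \<in> a. B \<subseteq> C1}) (card {B \<in> a. B \<subseteq> C2}) 0"
    using S_MM[OF tc aO pure] .
  also have "\<dots> = 0"
  proof -
    have ipa: "ispart P a" using aO by (rule Orp_ispart)
    have fa: "finite a" using ispart_finite[OF fin ipa] .
    obtain x where x: "x \<in> C1" using C1ne by blast
    then obtain X where X: "X \<in> a" "x \<in> X" using ispart_cover[OF ipa, of x] PC by blast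
    have "X \<subseteq> C1" using pure X x twoch_disj[OF tc] by blast
    hence "card {B \<in> a. B \<subseteq> C1} \<noteq> 0" using X fa by (auto simp: card_eq_0_iff)
    then obtain p where p: "card {B \<in> a. B \<subseteq> C1} = Suc p" using not0_implies_Suc by blast
    obtain y where y: "y \<in> C2" using C2ne by blast
    then obtain Y where Y: "Y \<in> a" "y \<in> Y" using ispart_cover[OF ipa, of y] PC by blast
    have "Y \<subseteq> C2" using pure Y y twoch_disj[OF tc] by blast
    hence "card {B \<in> a. B \<subseteq> C2} \<noteq> 0" using Y fa by (auto simp: card_eq_0_iff)
    then obtain q where q: "card {B \<in> a. B \<subseteq> C2} = Suc q" using not0_implies_Suc by blast
    show ?thesis unfolding p q by (rule MM_zero)
  qed
  finally show ?thesis by simp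
qed

theorem proposition2p2:
  fixes P C1 C2 :: "'a set" and le :: "'a \<Rightarrow> 'a \<Rightarrow> bool"
  assumes "finite P"
    and "poset_on P le"
    and "P = C1 \<union> C2"
    and "C1 \<inter> C2 = {}"
    and "C1 \<noteq> {}" and "C2 \<noteq> {}"
    and "is_chain P le C1" and "is_chain P le C2"
    and "\<forall>x\<in>C1. \<forall>y\<in>C2. \<not> le x y \<and> \<not> le y x"
    and "a \<in> Orp P le"
  shows "opfact P le a = card (anc P le a)
    \<and> ((\<forall>B\<in>a. B \<subseteq> C1 \<or> B \<subseteq> C2) \<longrightarrow> dfrak P le a = 0)"
proof -
  have tc: "twoch P le C1 C2" unfolding twoch_def using assms by blast
  show ?thesis using part1[OF tc assms(10)] part2[OF tc assms(10) assms(5,6)] by blast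
qed


end
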